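(* Let $V$ be a real vector space of dimension $n$ and $2\le k\le n-1$. A standard isotropic subspace $L\subseteq V\oplus\wedge^kV^*$ satisfies (C2s) if and only if either $L=\{X+i_X\omega\mid X\in V\}$ is the graph of a decomposable $(k+1)$-form $\omega\in\wedge^{k+1}V^*$, or $L=E+\mathrm{Ann}(E)$ for a subspace $E\subseteq V$ with $\dim E\le n-k$.
   Context: On $V\oplus\wedge^kV^*$ the pairing is $\langle X+\alpha,Y+\beta\rangle=i_X\beta+i_Y\alpha\in\wedge^{k-1}V^*$, with orthogonal $L^\perp$; $L$ is isotropic if $L\subseteq L^\perp$. $\mathrm{pr}_1,\mathrm{pr}_2$ are the projections onto $V$, $\wedge^kV^*$. For $W\subseteq V$, $\mathrm{Ann}(W)=\{\alpha\in\wedge^kV^*\mid i_Y\alpha=0\ \forall Y\in W\}$; for $S\subseteq\wedge^kV^*$, $S^\circ=\{X\in V\mid i_X\eta=0\ \forall\eta\in S\}$. An isotropic $L$ is standard if $\mathrm{Ann}(E)^\circ=E$ for $E=\mathrm{pr}_1(L)$ (equivalently $\dim E=n$ or $\dim E\le n-k$). Condition (C2s): $L\subseteq L^\perp$ and $\mathrm{Ann}(L\cap V)=\mathrm{pr}_2(L)$. *)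

theory Defs
  imports "HOL-Analysis.Analysis" "HOL-Combinatorics.Permutations"
begin

text \<open>Alternating k-forms on a finite-dimensional real vector space 'v, represented as
functions of a sequence of vectors that depend only on the first k entries, are linear
in each of those entries, and vanish when two of those entries coincide.\<close>

definition kforms :: "nat \<Rightarrow> ((nat \<Rightarrow> 'v::euclidean_space) \<Rightarrow> real) set" where
  "kforms k = {\<alpha>.
     (\<forall>v w. (\<forall>i<k. v i = w i) \<longrightarrow> \<alpha> v = \<alpha> w) \<and>
     (\<forall>i<k. \<forall>v. linear (\<lambda>x. \<alpha> (v(i := x)))) \<and>
     (\<forall>v i j. i < k \<and> j < k \<and> i \<noteq> j \<and> v i = v j \<longrightarrow> \<alpha> v = 0)}"

definition contr :: "'v \<Rightarrow> ((nat \<Rightarrow> 'v) \<Rightarrow> real) \<Rightarrow> ((nat \<Rightarrow> 'v) \<Rightarrow> real)" where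
  "contr X \<alpha> = (\<lambda>v. \<alpha> (case_nat X v))"

definition wedge1 :: "nat \<Rightarrow> (nat \<Rightarrow> 'v \<Rightarrow> real) \<Rightarrow> ((nat \<Rightarrow> 'v) \<Rightarrow> real)" where
  "wedge1 m \<theta> = (\<lambda>v. \<Sum>p | p permutes {..<m}. of_int (sign p) * (\<Prod>i<m. \<theta> i (v (p i))))"

definition decomposable :: "nat \<Rightarrow> ((nat \<Rightarrow> 'v::euclidean_space) \<Rightarrow> real) \<Rightarrow> bool" where
  "decomposable m \<omega> \<longleftrightarrow> (\<exists>\<theta>. (\<forall>i<m. linear (\<theta> i)) \<and> \<omega> = wedge1 m \<theta>)"

definition is_subspace :: "nat \<Rightarrow> ('v::euclidean_space \<times> ((nat \<Rightarrow> 'v) \<Rightarrow> real)) set \<Rightarrow> bool" where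
  "is_subspace k L \<longleftrightarrow> L \<subseteq> UNIV \<times> kforms k \<and> (0, \<lambda>v. 0) \<in> L \<and>
     (\<forall>X \<alpha> Y \<beta>. (X, \<alpha>) \<in> L \<and> (Y, \<beta>) \<in> L \<longrightarrow> (X + Y, \<lambda>v. \<alpha> v + \<beta> v) \<in> L) \<and>
     (\<forall>c X \<alpha>. (X, \<alpha>) \<in> L \<longrightarrow> (c *\<^sub>R X, \<lambda>v. c * \<alpha> v) \<in> L)"

definition pairing :: "('v \<times> ((nat \<Rightarrow> 'v) \<Rightarrow> real)) \<Rightarrow> ('v \<times> ((nat \<Rightarrow> 'v) \<Rightarrow> real)) \<Rightarrow> ((nat \<Rightarrow> 'v) \<Rightarrow> real)" where
  "pairing a b = (\<lambda>v. contr (fst a) (snd b) v + contr (fst b) (snd a) v)"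

definition orth :: "nat \<Rightarrow> ('v::euclidean_space \<times> ((nat \<Rightarrow> 'v) \<Rightarrow> real)) set \<Rightarrow> ('v \<times> ((nat \<Rightarrow> 'v) \<Rightarrow> real)) set" where
  "orth k L = {b \<in> UNIV \<times> kforms k. \<forall>a\<in>L. pairing a b = (\<lambda>v. 0)}"

definition isotropic :: "nat \<Rightarrow> ('v::euclidean_space \<times> ((nat \<Rightarrow> 'v) \<Rightarrow> real)) set \<Rightarrow> bool" where
  "isotropic k L \<longleftrightarrow> L \<subseteq> orth k L"

definition Ann :: "nat \<Rightarrow> 'v::euclidean_space set \<Rightarrow> ((nat \<Rightarrow> 'v) \<Rightarrow> real) set" where
  "Ann k W = {\<alpha> \<in> kforms k. \<forall>Y\<in>W. contr Y \<alpha> = (\<lambda>v. 0)}"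

definition annV :: "((nat \<Rightarrow> 'v) \<Rightarrow> real) set \<Rightarrow> 'v set" where
  "annV S = {X. \<forall>\<eta>\<in>S. contr X \<eta> = (\<lambda>v. 0)}"

definition capV :: "('v \<times> ((nat \<Rightarrow> 'v) \<Rightarrow> real)) set \<Rightarrow> 'v set" where
  "capV L = {X. (X, (\<lambda>v. 0)) \<in> L}"

definition standard :: "nat \<Rightarrow> ('v::euclidean_space \<times> ((nat \<Rightarrow> 'v) \<Rightarrow> real)) set \<Rightarrow> bool" where
  "standard k L \<longleftrightarrow> isotropic k L \<and> annV (Ann k (fst ` L)) = fst ` L"

definition C2s :: "nat \<Rightarrow> ('v::euclidean_space \<times> ((nat \<Rightarrow> 'v) \<Rightarrow> real)) set \<Rightarrow> bool" where
  "C2s k L \<longleftrightarrow> isotropic k L \<and> Ann k (capV L) = snd ` L"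

end

theory Submission
  imports Defs
begin


lemma kf_dep: "\<alpha> \<in> kforms k \<Longrightarrow> (\<And>i. i<k \<Longrightarrow> v i = w i) \<Longrightarrow> \<alpha> v = \<alpha> w"
  unfolding kforms_def by blast
lemma kf_lin: "\<alpha> \<in> kforms k \<Longrightarrow> i<k \<Longrightarrow> linear (\<lambda>x. \<alpha> (v(i:=x)))"
  unfolding kforms_def by blast
lemma kf_alt: "\<alpha> \<in> kforms k \<Longrightarrow> i<k \<Longrightarrow> j<k \<Longrightarrow> i\<noteq>j \<Longrightarrow> v i = v j \<Longrightarrow> \<alpha> v = 0"
  unfolding kforms_def by blast
lemma kf_add: "\<alpha> \<in> kforms k \<Longrightarrow> i<k \<Longrightarrow> \<alpha> (v(i:=x+y)) = \<alpha> (v(i:=x)) + \<alpha> (v(i:=y))"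
  using linear_add[OF kf_lin] by blast
lemma kf_scale: "\<alpha> \<in> kforms k \<Longrightarrow> i<k \<Longrightarrow> \<alpha> (v(i:=c *\<^sub>R x)) = c * \<alpha> (v(i:=x))"
  using linear_scale[OF kf_lin] by fastforce
lemma kf_zero: "\<alpha> \<in> kforms k \<Longrightarrow> i<k \<Longrightarrow> \<alpha> (v(i:=0)) = 0"
  using kf_scale[of \<alpha> k i v 0 0] by simp

lemma kf_swap:
  assumes a: "\<alpha> \<in> kforms k" and ij: "i<k" "j<k" "i\<noteq>j"
  shows "\<alpha> (w \<circ> Transposition.transpose i j) = - \<alpha> w"
proof -
  define g where "g x y = \<alpha> (w(i:=x, j:=y))" for x y
  have gx: "g (x+x') y = g x y + g x' y" for x x' y
  proof -
    have "w(i:=z, j:=y) = (w(j:=y))(i:=z)" for z using ij by (auto simp: fun_eq_iff)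
    then show ?thesis unfolding g_def using kf_add[OF a ij(1), of "w(j:=y)"] by simp
  qed
  have gy: "g x (y+y') = g x y + g x y'" for x y y'
    unfolding g_def using kf_add[OF a ij(2), of "w(i:=x)"] by simp
  have g0: "g x x = 0" for x unfolding g_def by (rule kf_alt[OF a ij]) (use ij in auto)
  have "0 = g (w i + w j) (w i + w j)" using g0 by simp
  also have "\<dots> = g (w i) (w i + w j) + g (w j) (w i + w j)" by (rule gx)
  also have "\<dots> = g (w i) (w j) + g (w j) (w i)" using gy g0 by simp
  finally have "g (w j) (w i) = - g (w i) (w j)" by simp
  moreover have "w(i:=w i, j:=w j) = w" by auto
  moreover have "w(i:=w j, j:=w i) = w \<circ> Transposition.transpose i j"
    using ij by (auto simp: fun_eq_iff Transposition.transpose_def)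
  ultimately show ?thesis unfolding g_def by simp
qed

lemma kf_perm:
  assumes a: "\<alpha> \<in> kforms k" and p: "p permutes {..<k}"
  shows "\<alpha> (w \<circ> p) = of_int (sign p) * \<alpha> w"
  using p finite_lessThan[of k]
proof (induction p arbitrary: w rule: permutes_induct)
  case id then show ?case by simp
next
  case (swap a b p)
  have pp: "permutation p" using swap.hyps(4) permutation_permutes by blast
  have "\<alpha> (w \<circ> (Transposition.transpose a b \<circ> p)) = \<alpha> ((w \<circ> Transposition.transpose a b) \<circ> p)"
    by (simp add: comp_assoc)
  also have "\<dots> = of_int (sign p) * \<alpha> (w \<circ> Transposition.transpose a b)" using swap.IH by blast
  also have "\<dots> = - of_int (sign p) * \<alpha> w" using kf_swap[OF a, of a b w] swap.hyps by simp
  moreover have "sign (Transposition.transpose a b \<circ> p) = - sign p"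
    using swap.hyps by (simp add: sign_compose[OF permutation_swap_id pp] sign_swap_id)
  ultimately show ?case by (simp only: comp_def)
qed

lemma kf_kill:
  assumes a: "\<alpha> \<in> kforms k" and c: "contr Y \<alpha> = (\<lambda>v. 0)" and j: "j<k" "w j = Y"
  shows "\<alpha> w = 0"
proof -
  have 0: "\<alpha> u = 0" if "u 0 = Y" for u
  proof -
    have "case_nat (u 0) (\<lambda>i. u (Suc i)) = u" by (auto simp: fun_eq_iff split: nat.split)
    then have "\<alpha> u = contr Y \<alpha> (\<lambda>i. u (Suc i))" using that by (simp add: contr_def)
    then show ?thesis using c by simp
  qed
  show ?thesis
  proof (cases "j = 0")
    case True then show ?thesis using 0 j by simp
  next
    case False
    have "\<alpha> (w \<circ> Transposition.transpose 0 j) = 0" by (rule 0) (use j in simp)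
    then show ?thesis using kf_swap[OF a, of 0 j w] False j by simp
  qed
qed

lemma kf_span_zero:
  assumes a: "\<alpha> \<in> kforms k" and K: "\<And>Y. Y\<in>K \<Longrightarrow> contr Y \<alpha> = (\<lambda>v. 0)"
  and sp: "\<And>x. \<exists>b\<in>span (e ` {..<m}). x - b \<in> K"
  and z: "\<And>f. (\<forall>i<k. f i < m) \<Longrightarrow> \<alpha> (e \<circ> f) = 0"
  shows "\<alpha> w = 0"
proof -
  have claim: "\<forall>w. (\<forall>i. j \<le> i \<and> i < k \<longrightarrow> w i \<in> e ` {..<m}) \<longrightarrow> \<alpha> w = 0" if "j \<le> k" for j
    using that
  proof (induction j)
    case 0
    show ?case
    proof (intro allI impI)
      fix w assume h: "\<forall>i. 0 \<le> i \<and> i < k \<longrightarrow> w i \<in> e ` {..<m}"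
      define f where "f i = (SOME l. l < m \<and> w i = e l)" for i
      have "\<forall>i<k. f i < m \<and> w i = e (f i)"
      proof (intro allI impI)
        fix i assume "i < k"
        then obtain l where "l<m" "w i = e l" using h by blast
        then show "f i < m \<and> w i = e (f i)" unfolding f_def by (metis (mono_tags, lifting) someI)
      qed
      then have "\<alpha> w = \<alpha> (e \<circ> f)" by (intro kf_dep[OF a]) auto
      also have "\<dots> = 0" using z \<open>\<forall>i<k. f i < m \<and> w i = e (f i)\<close> by blast
      finally show "\<alpha> w = 0" .
    qed
  next
    case (Suc j)
    then have jk: "j < k" by simp
    show ?case
    proof (intro allI impI)
      fix w assume h: "\<forall>i. Suc j \<le> i \<and> i < k \<longrightarrow> w i \<in> e ` {..<m}"
      obtain b where b: "b \<in> span (e ` {..<m})" "w j - b \<in> K" using sp by blast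
      have sub: "subspace {y. \<alpha> (w(j:=y)) = 0}"
        using linear_subspace_kernel[OF kf_lin[OF a jk, of w]] by simp
      have "e ` {..<m} \<subseteq> {y. \<alpha> (w(j:=y)) = 0}"
      proof
        fix y assume "y \<in> e ` {..<m}"
        then show "y \<in> {y. \<alpha> (w(j:=y)) = 0}"
          using Suc.IH[of ] jk h by (auto simp: not_less_eq_eq le_Suc_eq)
      qed
      then have b0: "\<alpha> (w(j:=b)) = 0" using span_minimal[OF _ sub] b(1) by blast
      have r0: "\<alpha> (w(j:=w j - b)) = 0"
        by (rule kf_kill[OF a K[OF b(2)] jk]) simp
      have "\<alpha> w = \<alpha> (w(j:= b + (w j - b)))" by simp
      also have "\<dots> = 0" using kf_add[OF a jk, of w b "w j - b"] b0 r0 by simp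
      finally show "\<alpha> w = 0" .
    qed
  qed
  show ?thesis using claim[of k] by force
qed



lemma linear_real_mult: "linear (g::'a::real_vector \<Rightarrow> real) \<Longrightarrow> linear (\<lambda>x. c * g x * d)"
proof (rule linearI)
  assume l: "linear g"
  show "c * g (x + y) * d = c * g x * d + c * g y * d" for x y
    by (simp add: linear_add[OF l] distrib_left distrib_right)
  show "c * g (r *\<^sub>R x) * d = r *\<^sub>R (c * g x * d)" for r x
    by (simp add: linear_scale[OF l])
qed

lemma wedge_lin:
  assumes th: "\<And>i. i<m \<Longrightarrow> linear (\<theta> i)" and i: "i < m"
  shows "linear (\<lambda>x. wedge1 m \<theta> (v(i:=x)))"
proof -
  have "linear (\<lambda>x. of_int (sign p) * (\<Prod>l<m. \<theta> l ((v(i:=x)) (p l))))" if p: "p permutes {..<m}" for p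
  proof -
    define l0 where "l0 = inv p i"
    have l0: "l0 < m" "p l0 = i" unfolding l0_def
      using permutes_in_image[OF permutes_inv[OF p], of i] i permutes_inverses(1)[OF p] by auto
    have eq: "(\<Prod>l<m. \<theta> l ((v(i:=x)) (p l))) = \<theta> l0 x * (\<Prod>l\<in>{..<m}-{l0}. \<theta> l (v (p l)))" for x
    proof -
      have "(\<Prod>l<m. \<theta> l ((v(i:=x)) (p l))) = \<theta> l0 ((v(i:=x)) (p l0)) * (\<Prod>l\<in>{..<m}-{l0}. \<theta> l ((v(i:=x)) (p l)))"
        using l0 by (simp add: prod.remove)
      also have "(\<Prod>l\<in>{..<m}-{l0}. \<theta> l ((v(i:=x)) (p l))) = (\<Prod>l\<in>{..<m}-{l0}. \<theta> l (v (p l)))"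
      proof (rule prod.cong)
        fix l assume "l \<in> {..<m}-{l0}"
        then have "p l \<noteq> i" using l0 permutes_inj[OF p] by (auto dest: injD)
        then show "\<theta> l ((v(i:=x)) (p l)) = \<theta> l (v (p l))" by simp
      qed simp
      finally show ?thesis using l0 by simp
    qed
    show ?thesis unfolding eq
      using linear_real_mult[OF th[OF l0(1)], of "of_int (sign p)" "\<Prod>l\<in>{..<m}-{l0}. \<theta> l (v (p l))"]
      by (simp add: mult.assoc)
  qed
  then show ?thesis unfolding wedge1_def
    by (intro linear_compose_sum) auto
qed

lemma wedge_alt:
  assumes ij: "i<m" "j<m" "i\<noteq>j" and v: "v i = v j"
  shows "wedge1 m \<theta> v = 0"
proof -
  define f where "f p = of_int (sign p) * (\<Prod>l<m. \<theta> l (v (p l)))" for p :: "nat \<Rightarrow> nat"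
  define \<tau> where "\<tau> = Transposition.transpose i j"
  have tau: "\<tau> permutes {..<m}" unfolding \<tau>_def using ij by (intro permutes_swap_id) auto
  have vt: "v (\<tau> y) = v y" for y unfolding \<tau>_def using v by (auto simp: Transposition.transpose_def)
  have S: "sum f {p. p permutes {..<m}} = sum (\<lambda>p. f (\<tau> \<circ> p)) {p. p permutes {..<m}}"
    by (rule setum_permutations_compose_left[OF tau])
  have "f (\<tau> \<circ> p) = - f p" if "p permutes {..<m}" for p
  proof -
    have pp: "permutation p" using that permutation_permutes by blast
    have "sign (\<tau> \<circ> p) = - sign p" unfolding \<tau>_def
      using ij by (simp add: sign_compose[OF permutation_swap_id pp] sign_swap_id)
    then show ?thesis unfolding f_def using vt by simp
  qed
  then have "sum (\<lambda>p. f (\<tau> \<circ> p)) {p. p permutes {..<m}} = sum (\<lambda>p. - f p) {p. p permutes {..<m}}"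
    by (intro sum.cong) auto
  also have "\<dots> = - sum f {p. p permutes {..<m}}" by (rule sum_negf)
  finally have "sum (\<lambda>p. f (\<tau> \<circ> p)) {p. p permutes {..<m}} = - sum f {p. p permutes {..<m}}" .
  with S have "sum f {p. p permutes {..<m}} = 0" by simp
  then show ?thesis unfolding wedge1_def f_def by simp
qed

lemma wedge_kforms:
  fixes \<theta> :: "nat \<Rightarrow> 'a::euclidean_space \<Rightarrow> real"
  assumes th: "\<And>i. i<m \<Longrightarrow> linear (\<theta> i)"
  shows "wedge1 m \<theta> \<in> kforms m"
  unfolding kforms_def
proof (intro CollectI conjI allI impI)
  fix v w :: "nat \<Rightarrow> 'a" assume h: "\<forall>i<m. v i = w i"
  show "wedge1 m \<theta> v = wedge1 m \<theta> w" unfolding wedge1_def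
  proof (rule sum.cong)
    fix p assume "p \<in> {p. p permutes {..<m}}"
    then have "\<forall>l<m. p l < m" using permutes_in_image by fastforce
    then show "of_int (sign p) * (\<Prod>i<m. \<theta> i (v (p i))) = of_int (sign p) * (\<Prod>i<m. \<theta> i (w (p i)))"
      using h by (auto intro!: prod.cong)
  qed simp
next
  fix i and v :: "nat \<Rightarrow> 'a" assume "i < m" then show "linear (\<lambda>x. wedge1 m \<theta> (v(i := x)))" using wedge_lin[of m \<theta> i v] th by blast
next
  fix v :: "nat \<Rightarrow> 'a" and i j assume "i < m \<and> j < m \<and> i \<noteq> j \<and> v i = v j"
  then show "wedge1 m \<theta> v = 0" using wedge_alt by blast
qed

lemma wedge_row0:
  assumes i: "i<m" and z: "\<And>j. j<m \<Longrightarrow> \<theta> i (v j) = 0"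
  shows "wedge1 m \<theta> v = 0"
  unfolding wedge1_def
proof (rule sum.neutral, rule ballI)
  fix p assume "p \<in> {p. p permutes {..<m}}"
  then have "p i < m" using permutes_in_image i by fastforce
  then have "(\<Prod>l<m. \<theta> l (v (p l))) = 0" using i z by (intro prod_zero) auto
  then show "of_int (sign p) * (\<Prod>l<m. \<theta> l (v (p l))) = 0" by simp
qed

lemma wedge_col0:
  assumes j: "j<m" and z: "\<And>i. i<m \<Longrightarrow> \<theta> i (v j) = 0"
  shows "wedge1 m \<theta> v = 0"
  unfolding wedge1_def
proof (rule sum.neutral, rule ballI)
  fix p assume p: "p \<in> {p. p permutes {..<m}}"
  then have "inv p j < m" "p (inv p j) = j"
    using permutes_in_image[OF permutes_inv, of p "{..<m}" j] j permutes_inverses(1)[of p "{..<m}" j] by auto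
  then have "(\<Prod>l<m. \<theta> l (v (p l))) = 0" using z by (intro prod_zero bexI[of _ "inv p j"]) auto
  then show "of_int (sign p) * (\<Prod>l<m. \<theta> l (v (p l))) = 0" by simp
qed

lemma wedge_id:
  assumes d: "\<And>i j. i<m \<Longrightarrow> j<m \<Longrightarrow> \<theta> i (v j) = (if i = j then 1 else 0)"
  shows "wedge1 m \<theta> v = 1"
proof -
  have "wedge1 m \<theta> v = (\<Sum>p\<in>{p. p permutes {..<m}}. if p = id then 1 else 0)"
    unfolding wedge1_def
  proof (rule sum.cong)
    fix p assume p: "p \<in> {p. p permutes {..<m}}"
    show "of_int (sign p) * (\<Prod>i<m. \<theta> i (v (p i))) = (if p = id then 1 else 0)"
    proof (cases "p = id")
      case True then show ?thesis using d by simp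
    next
      case False
      then obtain l where l: "p l \<noteq> l" by (auto simp: fun_eq_iff)
      then have "l < m" using p permutes_not_in by fastforce
      moreover have "p l < m" using p \<open>l<m\<close> permutes_in_image by fastforce
      ultimately have "(\<Prod>i<m. \<theta> i (v (p i))) = 0" using d l by (intro prod_zero bexI[of _ l]) auto
      then show ?thesis using False by simp
    qed
  qed simp
  also have "\<dots> = 1" using permutes_id[of "{..<m}"] finite_permutations[of "{..<m}"] by (simp add: sum.delta)
  finally show ?thesis .
qed

lemma wedge_scale0:
  assumes m: "0 < m"
  shows "wedge1 m (\<theta>(0 := (\<lambda>x. c * \<theta> 0 x))) v = c * wedge1 m \<theta> v"
proof -
  have "(\<Prod>i<m. (\<theta>(0 := (\<lambda>x. c * \<theta> 0 x))) i (v (p i))) = c * (\<Prod>i<m. \<theta> i (v (p i)))" for p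
  proof -
    have "(\<Prod>i<m. (\<theta>(0 := (\<lambda>x. c * \<theta> 0 x))) i (v (p i)))
       = (\<Prod>i\<in>insert 0 ({..<m}-{0}). (\<theta>(0 := (\<lambda>x. c * \<theta> 0 x))) i (v (p i)))"
      using m by (intro prod.cong) auto
    also have "\<dots> = c * \<theta> 0 (v (p 0)) * (\<Prod>i\<in>{..<m}-{0}. \<theta> i (v (p i)))"
      by (subst prod.insert) (auto intro!: prod.cong)
    also have "\<dots> = c * (\<Prod>i\<in>insert 0 ({..<m}-{0}). \<theta> i (v (p i)))"
      by (subst prod.insert) auto
    also have "insert 0 ({..<m}-{0}) = {..<m}" using m by auto
    finally show ?thesis .
  qed
  then show ?thesis unfolding wedge1_def by (simp add: sum_distrib_left algebra_simps)
qed



lemma kforms_zero: "(\<lambda>v. 0) \<in> kforms k"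
  unfolding kforms_def by (auto intro: linearI)

lemma kforms_comb:
  assumes "\<alpha> \<in> kforms k" "\<beta> \<in> kforms k"
  shows "(\<lambda>v. a * \<alpha> v + b * \<beta> v) \<in> kforms k"
  unfolding kforms_def
proof (intro CollectI conjI allI impI)
  fix v w :: "nat \<Rightarrow> 'a" assume "\<forall>i<k. v i = w i"
  then show "a * \<alpha> v + b * \<beta> v = a * \<alpha> w + b * \<beta> w" using kf_dep[OF assms(1)] kf_dep[OF assms(2)] by metis
next
  fix i and v :: "nat \<Rightarrow> 'a" assume i: "i<k"
  show "linear (\<lambda>x. a * \<alpha> (v(i := x)) + b * \<beta> (v(i := x)))"
  proof (rule linearI)
    show "a * \<alpha> (v(i := x + y)) + b * \<beta> (v(i := x + y)) =
      a * \<alpha> (v(i := x)) + b * \<beta> (v(i := x)) + (a * \<alpha> (v(i := y)) + b * \<beta> (v(i := y)))" for x y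
      using kf_add[OF assms(1) i] kf_add[OF assms(2) i] by (simp add: algebra_simps)
    show "a * \<alpha> (v(i := r *\<^sub>R x)) + b * \<beta> (v(i := r *\<^sub>R x)) =
      r *\<^sub>R (a * \<alpha> (v(i := x)) + b * \<beta> (v(i := x)))" for r x
      using kf_scale[OF assms(1) i] kf_scale[OF assms(2) i] by (simp add: algebra_simps)
  qed
next
  fix v :: "nat \<Rightarrow> 'a" and i j assume "i < k \<and> j < k \<and> i \<noteq> j \<and> v i = v j"
  then have "\<alpha> v = 0" "\<beta> v = 0" using kf_alt[OF assms(1)] kf_alt[OF assms(2)] by blast+
  then show "a * \<alpha> v + b * \<beta> v = 0" by simp
qed

lemma case_nat_upd0: "case_nat X v = (case_nat Y v)(0 := X)"
  by (auto simp: fun_eq_iff split: nat.split)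

lemma case_nat_updS: "case_nat X (v(i:=x)) = (case_nat X v)(Suc i := x)"
  by (auto simp: fun_eq_iff split: nat.split)

lemma contr_kforms:
  assumes a: "\<alpha> \<in> kforms (Suc k)"
  shows "contr X \<alpha> \<in> kforms k"
  unfolding kforms_def contr_def
proof (intro CollectI conjI allI impI)
  fix v w :: "nat \<Rightarrow> 'a" assume h: "\<forall>i<k. v i = w i"
  show "\<alpha> (case_nat X v) = \<alpha> (case_nat X w)"
    by (rule kf_dep[OF a]) (use h in \<open>auto split: nat.split\<close>)
next
  fix i and v :: "nat \<Rightarrow> 'a" assume i: "i<k"
  show "linear (\<lambda>x. \<alpha> (case_nat X (v(i := x))))"
    unfolding case_nat_updS using kf_lin[OF a, of "Suc i"] i by simp
next
  fix v :: "nat \<Rightarrow> 'a" and i j assume h: "i < k \<and> j < k \<and> i \<noteq> j \<and> v i = v j"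
  show "\<alpha> (case_nat X v) = 0" by (rule kf_alt[OF a, of "Suc i" "Suc j"]) (use h in auto)
qed

lemma contr_add:
  assumes a: "\<alpha> \<in> kforms (Suc k)"
  shows "contr (X+Y) \<alpha> v = contr X \<alpha> v + contr Y \<alpha> v"
proof -
  have e: "\<alpha> (case_nat Z v) = \<alpha> ((case_nat 0 v)(0:=Z))" for Z by (rule arg_cong[where f=\<alpha>], rule case_nat_upd0)
  show ?thesis unfolding contr_def using kf_add[OF a, of 0 "case_nat 0 v" X Y] e[of "X+Y"] e[of X] e[of Y] by simp
qed

lemma contr_scale:
  assumes a: "\<alpha> \<in> kforms (Suc k)"
  shows "contr (c *\<^sub>R X) \<alpha> v = c * contr X \<alpha> v"
proof -
  have e: "\<alpha> (case_nat Z v) = \<alpha> ((case_nat 0 v)(0:=Z))" for Z by (rule arg_cong[where f=\<alpha>], rule case_nat_upd0)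
  show ?thesis unfolding contr_def using kf_scale[OF a, of 0 "case_nat 0 v" c X] e[of "c *\<^sub>R X"] e[of X] by simp
qed

lemma contr_0:
  assumes a: "\<alpha> \<in> kforms (Suc k)"
  shows "contr 0 \<alpha> v = 0"
  using contr_scale[OF a, of 0 0 v] by simp

lemma contr_diff:
  assumes a: "\<alpha> \<in> kforms (Suc k)"
  shows "contr (X - Y) \<alpha> v = contr X \<alpha> v - contr Y \<alpha> v"
  using contr_add[OF a, of "X - Y" Y v] by simp

lemma contr_sum:
  assumes a: "\<alpha> \<in> kforms (Suc k)" and I: "finite I"
  shows "contr (\<Sum>i\<in>I. c i *\<^sub>R X i) \<alpha> v = (\<Sum>i\<in>I. c i * contr (X i) \<alpha> v)"
  using I
proof (induction I rule: finite_induct)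
  case empty then show ?case using contr_0[OF a] by simp
next
  case (insert x F)
  then show ?case by (simp add: contr_add[OF a] contr_scale[OF a])
qed

lemma contr_swap:
  assumes a: "\<alpha> \<in> kforms (Suc (Suc k))"
  shows "contr X (contr Y \<alpha>) v = - contr Y (contr X \<alpha>) v"
proof -
  have "case_nat Y (case_nat X v) \<circ> Transposition.transpose 0 1 = case_nat X (case_nat Y v)"
    by (auto simp: fun_eq_iff Transposition.transpose_def split: nat.split)
  then show ?thesis unfolding contr_def
    using kf_swap[OF a, of 0 1 "case_nat Y (case_nat X v)"] by simp
qed

lemma contr_self:
  assumes a: "\<alpha> \<in> kforms (Suc (Suc k))"
  shows "contr X (contr X \<alpha>) v = 0"
  using contr_swap[OF a, of X X v] by simp

lemma contr_zero_form: "contr X (\<lambda>v. 0) = (\<lambda>v. 0)"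
  by (simp add: contr_def)

lemma perm_ext:
  fixes k :: nat
  assumes "inj_on f {..<k}" "f ` {..<k} \<subseteq> {..<k}"
  shows "(\<lambda>i. if i<k then f i else i) permutes {..<k}"
proof (rule bij_imp_permutes)
  have "inj_on (\<lambda>i. if i<k then f i else i) {..<k}" using assms(1) by (auto simp: inj_on_def)
  moreover have "(\<lambda>i. if i<k then f i else i) ` {..<k} = f ` {..<k}" by auto
  moreover have "f ` {..<k} = {..<k}" using endo_inj_surj[of "{..<k}" f] assms by simp
  ultimately show "bij_betw (\<lambda>i. if i<k then f i else i) {..<k} {..<k}" by (simp add: bij_betw_def)
qed auto

lemma kf_inj_eval:
  assumes a: "\<alpha> \<in> kforms k" and "inj_on f {..<k}" "f ` {..<k} \<subseteq> {..<k}"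
  shows "\<exists>s. s \<noteq> 0 \<and> \<alpha> (e \<circ> f) = s * \<alpha> e"
proof -
  define p where "p = (\<lambda>i. if i<k then f i else i)"
  have p: "p permutes {..<k}" unfolding p_def by (rule perm_ext[OF assms(2,3)])
  have "\<alpha> (e \<circ> f) = \<alpha> (e \<circ> p)" by (rule kf_dep[OF a]) (simp add: p_def)
  also have "\<dots> = of_int (sign p) * \<alpha> e" by (rule kf_perm[OF a p])
  finally show ?thesis by (intro exI[of _ "of_int (sign p)"]) simp
qed

lemma kf_noninj:
  assumes a: "\<alpha> \<in> kforms k" and "\<not> inj_on f {..<k}"
  shows "\<alpha> (e \<circ> f) = 0"
proof -
  obtain i j where "i<k" "j<k" "i\<noteq>j" "f i = f j" using assms(2) unfolding inj_on_def by blast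
  then show ?thesis by (intro kf_alt[OF a, of i j]) auto
qed

lemma kf_small_zero:
  assumes a: "\<alpha> \<in> kforms k" and K: "\<And>Y. Y\<in>K \<Longrightarrow> contr Y \<alpha> = (\<lambda>v. 0)"
  and sp: "\<And>x. \<exists>b\<in>span (e ` {..<m}). x - b \<in> K" and mk: "m < k"
  shows "\<alpha> w = 0"
proof (rule kf_span_zero[OF a K sp])
  fix f assume f: "\<forall>i<k. f i < m"
  have "card (f ` {..<k}) \<le> card {..<m}" using f by (intro card_mono) auto
  then have "\<not> inj_on f {..<k}" using mk by (intro pigeonhole) simp
  then show "\<alpha> (e \<circ> f) = 0" by (rule kf_noninj[OF a])
qed auto

lemma Ann_UNIV:
  assumes "0 < k" "\<alpha> \<in> Ann k UNIV"
  shows "\<alpha> = (\<lambda>v. 0)"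
proof
  fix w
  show "\<alpha> w = 0"
    by (rule kf_small_zero[of \<alpha> k UNIV "\<lambda>i. 0" 0]) (use assms in \<open>auto simp: Ann_def\<close>)
qed



lemma compl_basis:
  fixes K :: "'v::euclidean_space set"
  assumes K: "subspace K"
  obtains e m where "m + dim K = DIM('v)" "\<And>i j. i<m \<Longrightarrow> j<m \<Longrightarrow> e i \<bullet> e j = (if i=j then 1 else 0)"
   "\<And>i Y. i<m \<Longrightarrow> Y\<in>K \<Longrightarrow> e i \<bullet> Y = 0" "\<And>x. \<exists>b\<in>span (e ` {..<m}). x - b \<in> K"
   "\<And>x. (\<forall>Y\<in>K. x \<bullet> Y = 0) \<Longrightarrow> x \<in> span (e ` {..<m})"
proof -
  define U where "U = {y. \<forall>x\<in>K. orthogonal x y}"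
  have U: "subspace U" unfolding U_def by (rule subspace_orthogonal_to_vectors)
  have dU: "dim U + dim K = DIM('v)"
    using dim_subspace_orthogonal_to_vectors[OF K subspace_UNIV, of] unfolding U_def by simp
  obtain B where B: "B \<subseteq> U" "pairwise orthogonal B" "\<And>x. x \<in> B \<Longrightarrow> norm x = 1"
    "independent B" "card B = dim U" "span B = U"
    using orthonormal_basis_subspace[OF U] by metis
  have fB: "finite B" using B(4) by (rule independent_imp_finite)
  obtain h where h: "bij_betw h {0..<card B} B" using ex_bij_betw_nat_finite[OF fB] by blast
  have img: "h ` {..<dim U} = B" using h B(5) unfolding bij_betw_def by (simp add: lessThan_atLeast0)
  show ?thesis
  proof (rule that[of "dim U" h])
    show "dim U + dim K = DIM('v)" by (rule dU)
  next
    fix i j assume ij: "i < dim U" "j < dim U"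
    then have hi: "h i \<in> B" "h j \<in> B" using img by auto
    show "h i \<bullet> h j = (if i = j then 1 else 0)"
    proof (cases "i = j")
      case True then show ?thesis using B(3)[OF hi(1)] by (simp add: norm_eq_1)
    next
      case False
      then have "h i \<noteq> h j" using h ij B(5) unfolding bij_betw_def inj_on_def by auto
      then show ?thesis using B(2) hi False unfolding pairwise_def orthogonal_def by auto
    qed
  next
    fix i Y assume "i < dim U" "Y \<in> K"
    then have "h i \<in> U" using img B(1) by auto
    then show "h i \<bullet> Y = 0" using \<open>Y\<in>K\<close> unfolding U_def orthogonal_def by (auto simp: inner_commute)
  next
    fix x
    obtain y z where yz: "y \<in> span K" "\<And>w. w \<in> span K \<Longrightarrow> orthogonal z w" "x = y + z"
      using orthogonal_subspace_decomp_exists[of K x] by metis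
    have "z \<in> U" unfolding U_def using yz(2) span_base by (force simp: orthogonal_def inner_commute)
    then have "z \<in> span (h ` {..<dim U})" using img B(6) by simp
    moreover have "y \<in> K" using yz(1) K by (metis span_eq_iff)
    then have "x - z \<in> K" using yz(3) by simp
    ultimately show "\<exists>b\<in>span (h ` {..<dim U}). x - b \<in> K" by blast
  next
    fix x assume "\<forall>Y\<in>K. x \<bullet> Y = 0"
    then have "x \<in> U" unfolding U_def orthogonal_def by (auto simp: inner_commute)
    then show "x \<in> span (h ` {..<dim U})" using img B(6) by simp
  qed
qed

lemma dep_family:
  fixes f :: "'i \<Rightarrow> 'v::euclidean_space"
  assumes I: "finite I" and fP: "f ` I \<subseteq> P" and P: "subspace P" and c: "dim P < card I"
  shows "\<exists>c. (\<exists>i\<in>I. c i \<noteq> 0) \<and> (\<Sum>i\<in>I. c i *\<^sub>R f i) = 0"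
proof (cases "inj_on f I")
  case False
  then obtain i j where ij: "i\<in>I" "j\<in>I" "i\<noteq>j" "f i = f j" unfolding inj_on_def by blast
  define c where "c l = (if l = i then 1 else if l = j then -1 else (0::real))" for l
  have "c l *\<^sub>R f l = (if l = i then f i else 0) - (if l = j then f j else 0)" for l
    using ij unfolding c_def by auto
  then have "(\<Sum>l\<in>I. c l *\<^sub>R f l) = (\<Sum>l\<in>I. (if l = i then f i else 0) - (if l = j then f j else 0))"
    by simp
  also have "\<dots> = f i - f j" using ij I by (simp add: sum_subtractf sum.delta)
  finally show ?thesis using ij by (intro exI[of _ c]) (auto simp: c_def)
next
  case True
  have "card (f ` I) = card I" using card_image[OF True] .
  then have "dependent (f ` I)"
    using independent_card_le_dim[OF fP] c by (metis not_le)
  then obtain u where u: "\<exists>v\<in>f ` I. u v \<noteq> 0" "(\<Sum>v\<in>f ` I. u v *\<^sub>R v) = 0"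
    using dependent_finite[of "f ` I"] I by auto
  have "(\<Sum>i\<in>I. u (f i) *\<^sub>R f i) = (\<Sum>v\<in>f ` I. u v *\<^sub>R v)"
    by (simp add: sum.reindex[OF True])
  then show ?thesis using u by (intro exI[of _ "u \<circ> f"]) auto
qed

lemma choose_ge_n:
  fixes n j :: nat
  assumes "1 \<le> j" "j < n"
  shows "n \<le> n choose j"
  using assms
proof (induction n arbitrary: j)
  case 0 then show ?case by simp
next
  case (Suc n)
  show ?case
  proof (cases "j = 1")
    case True then show ?thesis by (simp add: choose_one)
  next
    case False
    then obtain j' where j': "j = Suc j'" "1 \<le> j'" using Suc.prems by (cases j) auto
    show ?thesis
    proof (cases "j' = n - 1")
      case True
      then have "Suc n choose j = Suc n choose (Suc n - j)" using Suc.prems by (intro binomial_symmetric) simp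
      also have "Suc n - j = 1" using True j' Suc.prems by simp
      finally show ?thesis by (simp add: choose_one)
    next
      case False
      have "n \<le> n choose j'" using Suc.IH[of j'] j' False Suc.prems by simp
      moreover have "0 < n choose Suc j'" using j' Suc.prems by (intro zero_less_binomial) simp
      moreover have "Suc n choose j = (n choose j') + (n choose Suc j')" using j' by simp
      ultimately show ?thesis by linarith
    qed
  qed
qed

lemma choose_gt:
  fixes m k :: nat
  assumes "2 \<le> k" "k + 2 \<le> m"
  shows "m < m choose k"
proof -
  obtain m' k' where mk: "m = Suc m'" "k = Suc k'" using assms by (cases m; cases k) auto
  have "m choose k = (m' choose k') + (m' choose k)" using mk by simp
  moreover have "m' \<le> m' choose k'" using assms mk by (intro choose_ge_n) auto
  moreover have "m' \<le> m' choose k" using assms mk by (intro choose_ge_n) auto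
  ultimately show ?thesis using assms mk by linarith
qed

lemma lin_repr:
  fixes \<theta> :: "'v::euclidean_space \<Rightarrow> real"
  assumes "linear \<theta>"
  shows "\<exists>a. \<forall>x. \<theta> x = a \<bullet> x"
proof (intro exI allI)
  fix x
  have "\<theta> x = \<theta> (\<Sum>b\<in>Basis. (x \<bullet> b) *\<^sub>R b)" by (simp add: euclidean_representation)
  also have "\<dots> = (\<Sum>b\<in>Basis. (x \<bullet> b) * \<theta> b)"
    using assms by (simp add: linear_sum linear_scale)
  also have "\<dots> = (\<Sum>b\<in>Basis. \<theta> b *\<^sub>R b) \<bullet> x" by (simp add: inner_sum_left inner_sum_right inner_commute mult.commute)
  finally show "\<theta> x = (\<Sum>b\<in>Basis. \<theta> b *\<^sub>R b) \<bullet> x" .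
qed

definition enum :: "nat set \<Rightarrow> nat \<Rightarrow> nat" where
  "enum S i = sorted_list_of_set S ! i"

lemma enum_props:
  assumes "finite S" "card S = k"
  shows "enum S ` {..<k} = S" "inj_on (enum S) {..<k}"
proof -
  have l: "length (sorted_list_of_set S) = k" using assms by simp
  have "enum S ` {..<k} = set (sorted_list_of_set S)" unfolding enum_def set_conv_nth l by auto
  then show "enum S ` {..<k} = S" using assms by simp
  show "inj_on (enum S) {..<k}" unfolding enum_def
    by (rule inj_on_nth) (use l assms in auto)
qed



lemma linear_inner_const: "linear (\<lambda>x. (a::'v::real_inner) \<bullet> x)"
  by (rule linearI) (simp_all add: inner_add_right)

lemma Kw_subspace:
  assumes w: "\<omega> \<in> kforms (Suc k)"
  shows "subspace {X. contr X \<omega> = (\<lambda>v. 0)}"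
  unfolding subspace_def
proof (intro conjI ballI allI)
  show "0 \<in> {X. contr X \<omega> = (\<lambda>v. 0)}" using contr_0[OF w] by auto
next
  fix x y assume "x \<in> {X. contr X \<omega> = (\<lambda>v. 0)}" "y \<in> {X. contr X \<omega> = (\<lambda>v. 0)}"
  then show "x + y \<in> {X. contr X \<omega> = (\<lambda>v. 0)}" using contr_add[OF w, of x y] by (simp add: fun_eq_iff)
next
  fix c x assume "x \<in> {X. contr X \<omega> = (\<lambda>v. 0)}"
  then show "c *\<^sub>R x \<in> {X. contr X \<omega> = (\<lambda>v. 0)}" using contr_scale[OF w, of c x] by (simp add: fun_eq_iff)
qed

lemma wedge_inner_kforms: "wedge1 m (\<lambda>i x. a i \<bullet> x) \<in> kforms m"
  by (rule wedge_kforms) (rule linear_inner_const)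

lemma dec_small:
  assumes w: "\<omega> \<in> kforms (Suc k)"
  and sp: "\<And>x. \<exists>b\<in>span (e ` {..<m}). x - b \<in> {X. contr X \<omega> = (\<lambda>v. 0)}" and mk: "m \<le> k"
  shows "\<omega> = (\<lambda>v. 0)"
proof
  fix w' show "\<omega> w' = 0" by (rule kf_small_zero[OF w _ sp]) (use mk in auto)
qed

lemma dec_top_form:
  assumes w: "\<omega> \<in> kforms (Suc k)"
  and orth: "\<And>i j. i<Suc k \<Longrightarrow> j<Suc k \<Longrightarrow> e i \<bullet> e j = (if i=j then 1 else 0)"
  and perp: "\<And>i Y. i<Suc k \<Longrightarrow> contr Y \<omega> = (\<lambda>v. 0) \<Longrightarrow> e i \<bullet> Y = 0"
  and sp: "\<And>x. \<exists>b\<in>span (e ` {..<Suc k}). x - b \<in> {X. contr X \<omega> = (\<lambda>v. 0)}"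
  shows "\<omega> = (\<lambda>v. \<omega> e * wedge1 (Suc k) (\<lambda>i x. e i \<bullet> x) v)"
proof -
  define c where "c = \<omega> e"
  define W where "W = wedge1 (Suc k) (\<lambda>i x. e i \<bullet> x)"
  define D where "D = (\<lambda>v. \<omega> v + (- c) * W v)"
  have Wk: "W \<in> kforms (Suc k)" unfolding W_def by (rule wedge_inner_kforms)
  have Dk: "D \<in> kforms (Suc k)" unfolding D_def using kforms_comb[OF w Wk, of 1 "-c"] by simp
  have We: "W e = 1" unfolding W_def by (rule wedge_id) (use orth in auto)
  have De: "D e = 0" unfolding D_def c_def We by simp
  have "D w' = 0" for w'
  proof (rule kf_span_zero[OF Dk _ sp])
    fix Y assume Y: "Y \<in> {X. contr X \<omega> = (\<lambda>v. 0)}"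
    have "contr Y W v = 0" for v unfolding W_def contr_def
      by (rule wedge_col0[of 0]) (use perp Y in auto)
    then show "contr Y D = (\<lambda>v. 0)" using Y by (auto simp: D_def contr_def fun_eq_iff)
  next
    fix f assume f: "\<forall>i<Suc k. f i < Suc k"
    show "D (e \<circ> f) = 0"
    proof (cases "inj_on f {..<Suc k}")
      case True
      then obtain s where "D (e \<circ> f) = s * D e" using kf_inj_eval[OF Dk True, of e] f by auto
      then show ?thesis using De by simp
    next
      case False then show ?thesis by (rule kf_noninj[OF Dk])
    qed
  qed
  then show ?thesis unfolding c_def[symmetric] W_def[symmetric] by (auto simp: D_def fun_eq_iff)
qed

lemma dec_top_decomp:
  assumes w: "\<omega> \<in> kforms (Suc k)"
  and orth: "\<And>i j. i<Suc k \<Longrightarrow> j<Suc k \<Longrightarrow> e i \<bullet> e j = (if i=j then 1 else 0)"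
  and perp: "\<And>i Y. i<Suc k \<Longrightarrow> contr Y \<omega> = (\<lambda>v. 0) \<Longrightarrow> e i \<bullet> Y = 0"
  and sp: "\<And>x. \<exists>b\<in>span (e ` {..<Suc k}). x - b \<in> {X. contr X \<omega> = (\<lambda>v. 0)}"
  shows "decomposable (Suc k) \<omega>"
proof -
  define \<theta> where "\<theta> = (\<lambda>i x. e i \<bullet> x)(0 := (\<lambda>x. \<omega> e * (e 0 \<bullet> x)))"
  have "linear (\<theta> i)" for i unfolding \<theta>_def
    using linear_real_mult[OF linear_inner_const, of "\<omega> e" "e 0" 1] linear_inner_const by auto
  moreover have "\<omega> = wedge1 (Suc k) \<theta>"
  proof
    fix v
    have "\<omega> v = \<omega> e * wedge1 (Suc k) (\<lambda>i x. e i \<bullet> x) v"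
      using fun_cong[OF dec_top_form[OF w orth perp sp], of v] by (simp only:)
    also have "\<dots> = wedge1 (Suc k) \<theta> v"
      unfolding \<theta>_def using wedge_scale0[of "Suc k" "\<lambda>i x. e i \<bullet> x" "\<omega> e" v] by simp
    finally show "\<omega> v = wedge1 (Suc k) \<theta> v" .
  qed
  ultimately show ?thesis unfolding decomposable_def by (intro exI[of _ \<theta>] conjI allI impI) (simp_all only:)
qed



lemma case_nat_comp: "case_nat (e l) (e \<circ> g) = e \<circ> case_nat l g"
  by (auto simp: fun_eq_iff split: nat.split)

lemma dec_top_surj:
  assumes w: "\<omega> \<in> kforms (Suc k)" and k: "0 < k"
  and orth: "\<And>i j. i<Suc k \<Longrightarrow> j<Suc k \<Longrightarrow> e i \<bullet> e j = (if i=j then 1 else 0)"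
  and perp: "\<And>i Y. i<Suc k \<Longrightarrow> contr Y \<omega> = (\<lambda>v. 0) \<Longrightarrow> e i \<bullet> Y = 0"
  and sp: "\<And>x. \<exists>b\<in>span (e ` {..<Suc k}). x - b \<in> {X. contr X \<omega> = (\<lambda>v. 0)}"
  and a: "\<alpha> \<in> Ann k {X. contr X \<omega> = (\<lambda>v. 0)}"
  shows "\<exists>X. \<alpha> = contr X \<omega>"
proof -
  obtain k' where k': "k = Suc k'" using k by (cases k) auto
  have w2: "\<omega> \<in> kforms (Suc (Suc k'))" using w k' by simp
  have ak: "\<alpha> \<in> kforms k" and aK: "\<And>Y. contr Y \<omega> = (\<lambda>v. 0) \<Longrightarrow> contr Y \<alpha> = (\<lambda>v. 0)"
    using a by (auto simp: Ann_def)
  have c: "\<omega> e \<noteq> 0"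
  proof
    assume "\<omega> e = 0"
    then have "\<omega> v = 0" for v using fun_cong[OF dec_top_form[OF w orth perp sp], of v] by simp
    then have "contr (e 0) \<omega> = (\<lambda>v. 0)" by (simp add: contr_def fun_eq_iff)
    then have "e 0 \<bullet> e 0 = 0" using perp[of 0 "e 0"] by simp
    then show False using orth[of 0 0] by simp
  qed
  define g where "g j = (\<lambda>i. if i < j then i else Suc i)" for j :: nat
  define \<sigma> where "\<sigma> j = \<omega> (e \<circ> case_nat j (g j))" for j
  have hinj: "inj_on (case_nat j (g j)) {..<Suc k}" for j
    unfolding inj_on_def g_def by (auto split: nat.split if_splits)
  have hsub: "case_nat j (g j) ` {..<Suc k} \<subseteq> {..<Suc k}" if "j \<le> k" for j
    using that unfolding g_def by (auto split: nat.split if_splits)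
  have snz: "\<sigma> j \<noteq> 0" if jk: "j \<le> k" for j
  proof -
    obtain s where "s \<noteq> 0" "\<sigma> j = s * \<omega> e"
      using kf_inj_eval[OF w hinj hsub[OF jk], of e] unfolding \<sigma>_def by auto
    then show ?thesis using c by simp
  qed
  define X where "X = (\<Sum>j\<in>{..k}. (\<alpha> (e \<circ> g j) / \<sigma> j) *\<^sub>R e j)"
  define D where "D = (\<lambda>v. 1 * \<alpha> v + (-1) * contr X \<omega> v)"
  have Dk: "D \<in> kforms k" unfolding D_def by (rule kforms_comb[OF ak contr_kforms[OF w]])
  have ce: "contr (e l) \<omega> (e \<circ> g j) = (if l = j then \<sigma> j else 0)" if "l \<le> k" "j \<le> k" for l j
  proof (cases "l = j")
    case True then show ?thesis unfolding contr_def \<sigma>_def case_nat_comp by simp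
  next
    case False
    define i where "i = (if l < j then l else l - 1)"
    have i: "i < k" "g j i = l" using that False unfolding i_def g_def by auto
    have eq: "case_nat l (g j) 0 = case_nat l (g j) (Suc i)" using i by simp
    have "\<not> inj_on (case_nat l (g j)) {..<Suc k}"
    proof
      assume inj: "inj_on (case_nat l (g j)) {..<Suc k}"
      have "(0::nat) = Suc i" by (rule inj_onD[OF inj eq]) (use i(1) in simp_all)
      then show False by simp
    qed
    then have "\<omega> (e \<circ> case_nat l (g j)) = 0" by (rule kf_noninj[OF w])
    then show ?thesis unfolding contr_def case_nat_comp using False by simp
  qed
  have Dg: "D (e \<circ> g j) = 0" if j: "j \<le> k" for j
  proof -
    have "contr X \<omega> (e \<circ> g j) = (\<Sum>l\<in>{..k}. (\<alpha> (e \<circ> g l) / \<sigma> l) * contr (e l) \<omega> (e \<circ> g j))"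
      unfolding X_def by (rule contr_sum[OF w]) simp
    also have "\<dots> = (\<Sum>l\<in>{..k}. if l = j then \<alpha> (e \<circ> g j) else 0)"
      by (rule sum.cong) (use ce j snz in auto)
    also have "\<dots> = \<alpha> (e \<circ> g j)" using j by (simp add: sum.delta)
    finally show ?thesis unfolding D_def by simp
  qed
  have D0: "D v = 0" for v
  proof (rule kf_span_zero[OF Dk _ sp])
    fix Y assume Y: "Y \<in> {X. contr X \<omega> = (\<lambda>v. 0)}"
    have "contr Y (contr X \<omega>) u = 0" for u
    proof -
      have "contr Y \<omega> (case_nat X u) = 0" using Y by simp
      then show ?thesis using contr_swap[OF w2, of Y X u] by (simp add: contr_def)
    qed
    moreover have "contr Y \<alpha> u = 0" for u using aK Y by simp
    ultimately show "contr Y D = (\<lambda>v. 0)" unfolding D_def by (auto simp: contr_def fun_eq_iff)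
  next
    fix f assume f: "\<forall>i<k. f i < Suc k"
    show "D (e \<circ> f) = 0"
    proof (cases "inj_on f {..<k}")
      case False then show ?thesis by (rule kf_noninj[OF Dk])
    next
      case True
      have "\<exists>j\<le>k. j \<notin> f ` {..<k}"
      proof (rule ccontr)
        assume "\<not> ?thesis"
        then have "{..<Suc k} \<subseteq> f ` {..<k}" by auto
        then have "card {..<Suc k} \<le> card (f ` {..<k})" by (intro card_mono) auto
        also have "\<dots> \<le> k" using card_image_le[of "{..<k}" f] by simp
        finally show False by simp
      qed
      then obtain j where j: "j \<le> k" "j \<notin> f ` {..<k}" by blast
      define p where "p i = (if f i < j then f i else f i - 1)" for i
      have fj: "f i \<noteq> j" if "i < k" for i using j that by auto
      have gp: "g j (p i) = f i" if "i < k" for i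
        using fj[OF that] unfolding g_def p_def by auto
      have pinj: "inj_on p {..<k}"
      proof (rule inj_onI)
        fix a b assume ab: "a \<in> {..<k}" "b \<in> {..<k}" "p a = p b"
        then have "g j (p a) = g j (p b)" by simp
        then have "f a = f b" using gp[of a] gp[of b] ab by simp
        then show "a = b" using True ab unfolding inj_on_def by blast
      qed
      have psub: "p ` {..<k} \<subseteq> {..<k}"
      proof
        fix y assume "y \<in> p ` {..<k}"
        then obtain i where i: "i < k" "y = p i" by auto
        then show "y \<in> {..<k}" using f fj[OF i(1)] j unfolding p_def by auto
      qed
      have "D (e \<circ> f) = D ((e \<circ> g j) \<circ> p)" by (rule kf_dep[OF Dk]) (simp add: gp)
      also obtain s where "\<dots> = s * D (e \<circ> g j)" using kf_inj_eval[OF Dk pinj psub, of "e \<circ> g j"] by auto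
      also have "\<dots> = 0" using Dg[OF j(1)] by simp
      finally show ?thesis .
    qed
  qed
  have "\<alpha> = contr X \<omega>"
  proof
    fix v show "\<alpha> v = contr X \<omega> v" using D0[of v] unfolding D_def by simp
  qed
  then show ?thesis by blast
qed



lemma dec_big:
  assumes w: "\<omega> \<in> kforms (Suc k)" and k2: "2 \<le> k" and mk: "k + 2 \<le> m"
  and orth: "\<And>i j. i<m \<Longrightarrow> j<m \<Longrightarrow> e i \<bullet> e j = (if i=j then 1 else 0)"
  and perp: "\<And>i Y. i<m \<Longrightarrow> contr Y \<omega> = (\<lambda>v. 0) \<Longrightarrow> e i \<bullet> Y = 0"
  and sp: "\<And>x. \<exists>b\<in>span (e ` {..<m}). x - b \<in> {X. contr X \<omega> = (\<lambda>v. 0)}"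
  and surj: "Ann k {X. contr X \<omega> = (\<lambda>v. 0)} \<subseteq> range (\<lambda>X. contr X \<omega>)"
  shows False
proof -
  define I where "I = {S. S \<subseteq> {..<m} \<and> card S = k}"
  have fI: "finite I" unfolding I_def by (rule finite_subset[of _ "Pow {..<m}"]) auto
  have cI: "card I = m choose k" unfolding I_def using n_subsets[of "{..<m}" k] by simp
  define \<beta> where "\<beta> S = wedge1 k (\<lambda>i x. e (enum S i) \<bullet> x)" for S
  have en: "enum S ` {..<k} = S" "inj_on (enum S) {..<k}" if "S \<in> I" for S
    using enum_props[of S k] that finite_subset[of S "{..<m}"] unfolding I_def by auto
  have enm: "enum S i < m" if "S \<in> I" "i < k" for S i
    using en(1)[OF that(1)] that unfolding I_def by auto
  have bAnn: "\<beta> S \<in> Ann k {X. contr X \<omega> = (\<lambda>v. 0)}" if S: "S \<in> I" for S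
    unfolding Ann_def
  proof (intro CollectI conjI ballI)
    show "\<beta> S \<in> kforms k" unfolding \<beta>_def by (rule wedge_inner_kforms)
  next
    fix Y assume Y: "Y \<in> {X. contr X \<omega> = (\<lambda>v. 0)}"
    show "contr Y (\<beta> S) = (\<lambda>v. 0)"
    proof
      fix v show "contr Y (\<beta> S) v = 0" unfolding \<beta>_def contr_def
        by (rule wedge_col0[of 0]) (use k2 perp Y enm[OF S] in auto)
    qed
  qed
  have exZ: "\<exists>b. b \<in> span (e ` {..<m}) \<and> contr b \<omega> = \<beta> S" if S: "S \<in> I" for S
  proof -
    obtain X where X: "\<beta> S = contr X \<omega>" using surj bAnn[OF S] by blast
    obtain b where b: "b \<in> span (e ` {..<m})" "contr (X - b) \<omega> = (\<lambda>v. 0)" using sp[of X] by blast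
    have "contr b \<omega> = contr X \<omega>"
    proof
      fix v show "contr b \<omega> v = contr X \<omega> v"
        using contr_diff[OF w, of X b v] fun_cong[OF b(2), of v] by simp
    qed
    then show ?thesis using b X by auto
  qed
  define Z where "Z S = (SOME b. b \<in> span (e ` {..<m}) \<and> contr b \<omega> = \<beta> S)" for S
  have Z: "Z S \<in> span (e ` {..<m})" "contr (Z S) \<omega> = \<beta> S" if "S \<in> I" for S
    using someI_ex[OF exZ[OF that]] unfolding Z_def by auto
  have dP: "dim (span (e ` {..<m})) \<le> m"
  proof -
    have "dim (span (e ` {..<m})) = dim (e ` {..<m})" by (rule dim_span)
    also have "\<dots> \<le> card (e ` {..<m})" by (rule dim_le_card) (auto intro: span_base)
    also have "\<dots> \<le> m" using card_image_le[of "{..<m}" e] by simp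
    finally show ?thesis .
  qed
  have "m < card I" unfolding cI by (rule choose_gt[OF k2 mk])
  then obtain c where c: "\<exists>S\<in>I. c S \<noteq> 0" "(\<Sum>S\<in>I. c S *\<^sub>R Z S) = 0"
    using dep_family[OF fI _ subspace_span, of Z "e ` {..<m}"] Z dP by force
  have ev: "\<beta> S (e \<circ> enum S') = (if S = S' then 1 else 0)" if S: "S \<in> I" and S': "S' \<in> I" for S S'
  proof (cases "S = S'")
    case True
    have "\<beta> S (e \<circ> enum S) = 1" unfolding \<beta>_def
    proof (rule wedge_id)
      fix i j assume ij: "i < k" "j < k"
      have "enum S i = enum S j \<longleftrightarrow> i = j" using en(2)[OF S] ij unfolding inj_on_def by auto
      then show "e (enum S i) \<bullet> (e \<circ> enum S) j = (if i = j then 1 else 0)"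
        using orth[OF enm[OF S ij(1)] enm[OF S ij(2)]] by simp
    qed
    then show ?thesis using True by simp
  next
    case False
    have "\<exists>i<k. enum S i \<notin> S'"
    proof (rule ccontr)
      assume "\<not> ?thesis"
      then have "enum S ` {..<k} \<subseteq> S'" by auto
      then have "S \<subseteq> S'" using en(1)[OF S] by simp
      moreover have "finite S'" "card S = card S'" using S S' finite_subset[of S' "{..<m}"] unfolding I_def by auto
      ultimately have "S = S'" using card_subset_eq by blast
      then show False using False by simp
    qed
    then obtain i where i: "i < k" "enum S i \<notin> S'" by blast
    have "\<beta> S (e \<circ> enum S') = 0" unfolding \<beta>_def
    proof (rule wedge_row0[OF i(1)])
      fix j assume j: "j < k"
      have "enum S' j \<in> S'" using en(1)[OF S'] j by auto
      then have "enum S i \<noteq> enum S' j" using i by auto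
      then show "e (enum S i) \<bullet> (e \<circ> enum S') j = 0" using orth[OF enm[OF S i(1)] enm[OF S' j]] by simp
    qed
    then show ?thesis using False by simp
  qed
  have "c S' = 0" if S': "S' \<in> I" for S'
  proof -
    have "0 = contr (\<Sum>S\<in>I. c S *\<^sub>R Z S) \<omega> (e \<circ> enum S')" using c(2) contr_0[OF w] by simp
    also have "\<dots> = (\<Sum>S\<in>I. c S * contr (Z S) \<omega> (e \<circ> enum S'))" by (rule contr_sum[OF w fI])
    also have "\<dots> = (\<Sum>S\<in>I. if S = S' then c S' else 0)"
      by (rule sum.cong) (use Z ev S' in auto)
    also have "\<dots> = c S'" using S' fI by (simp add: sum.delta')
    finally show ?thesis by simp
  qed
  then show False using c(1) by blast
qed

lemma dec_bound:
  fixes \<theta> :: "nat \<Rightarrow> 'v::euclidean_space \<Rightarrow> real"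
  assumes th: "\<And>i. i<Suc k \<Longrightarrow> linear (\<theta> i)" and w: "\<omega> = wedge1 (Suc k) \<theta>"
  shows "DIM('v) \<le> Suc k + dim {X. contr X \<omega> = (\<lambda>v. 0)}"
proof -
  have "\<forall>i. \<exists>a. i < Suc k \<longrightarrow> (\<forall>x. \<theta> i x = a \<bullet> x)" using lin_repr th by blast
  then obtain a where a: "\<And>i x. i < Suc k \<Longrightarrow> \<theta> i x = a i \<bullet> x" by metis
  define A where "A = span (a ` {..<Suc k})"
  define A' where "A' = {y. \<forall>x\<in>A. orthogonal x y}"
  have dA: "dim A' + dim A = DIM('v)"
    using dim_subspace_orthogonal_to_vectors[OF subspace_span[of "a ` {..<Suc k}"] subspace_UNIV]
    unfolding A'_def A_def by simp
  have "dim A \<le> Suc k"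
  proof -
    have "dim A = dim (a ` {..<Suc k})" unfolding A_def by (rule dim_span)
    also have "\<dots> \<le> card (a ` {..<Suc k})" by (rule dim_le_card) (auto intro: span_base)
    also have "\<dots> \<le> Suc k" using card_image_le[of "{..<Suc k}" a] by simp
    finally show ?thesis .
  qed
  moreover have "A' \<subseteq> {X. contr X \<omega> = (\<lambda>v. 0)}"
  proof
    fix y assume y: "y \<in> A'"
    have "contr y \<omega> v = 0" for v unfolding w contr_def
    proof (rule wedge_col0[of 0])
      fix i assume i: "i < Suc k"
      have "a i \<in> A" unfolding A_def using i by (auto intro: span_base)
      then show "\<theta> i (case_nat y v 0) = 0" using y a[OF i] unfolding A'_def orthogonal_def by simp
    qed simp
    then show "y \<in> {X. contr X \<omega> = (\<lambda>v. 0)}" by auto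
  qed
  then have "dim A' \<le> dim {X. contr X \<omega> = (\<lambda>v. 0)}" by (rule dim_subset)
  ultimately show ?thesis using dA by linarith
qed



lemma range_sub_Ann:
  assumes w: "\<omega> \<in> kforms (Suc (Suc k))"
  shows "contr X \<omega> \<in> Ann (Suc k) {X. contr X \<omega> = (\<lambda>v. 0)}"
  unfolding Ann_def
proof (intro CollectI conjI ballI)
  show "contr X \<omega> \<in> kforms (Suc k)" by (rule contr_kforms[OF w])
next
  fix Y assume Y: "Y \<in> {X. contr X \<omega> = (\<lambda>v. 0)}"
  show "contr Y (contr X \<omega>) = (\<lambda>v. 0)"
  proof
    fix u
    have "contr Y \<omega> (case_nat X u) = 0" using Y by simp
    then show "contr Y (contr X \<omega>) u = 0" using contr_swap[OF w, of Y X u] by (simp add: contr_def)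
  qed
qed

lemma wedge_zero_decomp: "decomposable (Suc k) (\<lambda>v. 0)"
  unfolding decomposable_def
proof (intro exI[of _ "\<lambda>i x. 0"] conjI allI impI)
  show "linear (\<lambda>x::'a. 0::real)" for i by (rule linearI) auto
  show "(\<lambda>v. 0) = wedge1 (Suc k) (\<lambda>i (x::'a). 0::real)"
    by (rule ext, rule sym, rule wedge_row0[of 0]) auto
qed

lemma dec_main:
  fixes \<omega> :: "(nat \<Rightarrow> 'v::euclidean_space) \<Rightarrow> real"
  assumes w: "\<omega> \<in> kforms (Suc k)" and k2: "2 \<le> k"
  shows "decomposable (Suc k) \<omega> \<longleftrightarrow> Ann k {X. contr X \<omega> = (\<lambda>v. 0)} \<subseteq> range (\<lambda>X. contr X \<omega>)"
proof -
  define K where "K = {X. contr X \<omega> = (\<lambda>v. 0)}"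
  have Ks: "subspace K" unfolding K_def by (rule Kw_subspace[OF w])
  obtain e m where em: "m + dim K = DIM('v)" "\<And>i j. i<m \<Longrightarrow> j<m \<Longrightarrow> e i \<bullet> e j = (if i=j then 1 else 0)"
   "\<And>i Y. i<m \<Longrightarrow> Y\<in>K \<Longrightarrow> e i \<bullet> Y = 0" "\<And>x. \<exists>b\<in>span (e ` {..<m}). x - b \<in> K"
    using compl_basis[OF Ks] by metis
  have perp: "\<And>i Y. i<m \<Longrightarrow> contr Y \<omega> = (\<lambda>v. 0) \<Longrightarrow> e i \<bullet> Y = 0" using em(3) unfolding K_def by blast
  have sp: "\<And>x. \<exists>b\<in>span (e ` {..<m}). x - b \<in> {X. contr X \<omega> = (\<lambda>v. 0)}" using em(4) unfolding K_def by blast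
  consider "m \<le> k" | "m = Suc k" | "k + 2 \<le> m" by linarith
  then show ?thesis
  proof cases
    case 1
    have z: "\<omega> = (\<lambda>v. 0)" by (rule dec_small[OF w sp 1])
    have "Ann k {X. contr X \<omega> = (\<lambda>v. 0)} \<subseteq> range (\<lambda>X. contr X \<omega>)"
    proof
      fix \<alpha> assume a: "\<alpha> \<in> Ann k {X. contr X \<omega> = (\<lambda>v. 0)}"
      have "{X. contr X \<omega> = (\<lambda>v. 0)} = UNIV" using z by (simp add: contr_def)
      then have "\<alpha> = (\<lambda>v. 0)" using Ann_UNIV[of k \<alpha>] a k2 by simp
      then show "\<alpha> \<in> range (\<lambda>X. contr X \<omega>)" using z by (auto simp: contr_def)
    qed
    then show ?thesis using z wedge_zero_decomp by simp
  next
    case 2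
    have dec: "decomposable (Suc k) \<omega>" by (rule dec_top_decomp[OF w]) (use em(2) perp sp 2 in auto)
    have "Ann k {X. contr X \<omega> = (\<lambda>v. 0)} \<subseteq> range (\<lambda>X. contr X \<omega>)"
    proof
      fix \<alpha> assume a: "\<alpha> \<in> Ann k {X. contr X \<omega> = (\<lambda>v. 0)}"
      have "\<exists>X. \<alpha> = contr X \<omega>" by (rule dec_top_surj[OF w _ _ _ _ a]) (use em(2) perp sp 2 k2 in auto)
      then show "\<alpha> \<in> range (\<lambda>X. contr X \<omega>)" by auto
    qed
    then show ?thesis using dec by simp
  next
    case 3
    have "\<not> decomposable (Suc k) \<omega>"
    proof
      assume "decomposable (Suc k) \<omega>"
      then obtain \<theta> where th: "\<And>i. i<Suc k \<Longrightarrow> linear (\<theta> i)" "\<omega> = wedge1 (Suc k) \<theta>"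
        unfolding decomposable_def by blast
      have "DIM('v) \<le> Suc k + dim K" unfolding K_def by (rule dec_bound[OF th])
      then show False using em(1) 3 by linarith
    qed
    moreover have "\<not> Ann k {X. contr X \<omega> = (\<lambda>v. 0)} \<subseteq> range (\<lambda>X. contr X \<omega>)"
      using dec_big[OF w k2 3 em(2) perp sp] by blast
    ultimately show ?thesis by simp
  qed
qed



lemma K_eq_E_aux:
  fixes K E :: "'v::euclidean_space set"
  assumes k2: "2 \<le> k" and dimE: "dim E + k \<le> DIM('v)" and Ks: "subspace K" and Es: "subspace E"
  and KE: "K \<subseteq> E" and X0: "X0 \<in> E" "X0 \<notin> K" and a0: "\<alpha>0 \<in> Ann k K"
  and partner: "\<And>\<beta>. \<beta> \<in> Ann k K \<Longrightarrow> \<exists>Y\<in>E. \<forall>v. contr X0 \<beta> v + contr Y \<alpha>0 v = 0"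
  shows False
proof -
  obtain k' where k': "k = Suc k'" using k2 by (cases k) auto
  have a0k: "\<alpha>0 \<in> kforms (Suc k')" and a0K: "\<And>Y. Y \<in> K \<Longrightarrow> contr Y \<alpha>0 = (\<lambda>v. 0)"
    using a0 k' by (auto simp: Ann_def)
  obtain y z where yz: "y \<in> span K" "\<And>w. w \<in> span K \<Longrightarrow> orthogonal z w" "X0 = y + z"
    using orthogonal_subspace_decomp_exists[of K X0] by metis
  have yK: "y \<in> K" using yz(1) Ks by (metis span_eq_iff)
  have zK: "z \<bullet> Y = 0" if "Y \<in> K" for Y using yz(2)[of Y] that span_base[of Y K] by (simp add: orthogonal_def)
  have z0: "z \<noteq> 0" using yz(3) yK X0(2) by auto
  define zz where "zz = z \<bullet> z"
  have zz: "zz > 0" unfolding zz_def using z0 by simp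
  define \<theta> where "\<theta> x = (z \<bullet> x) / zz" for x
  have thX0: "\<theta> X0 = 1" unfolding \<theta>_def yz(3) using zK[OF yK] zz by (simp add: inner_add_right zz_def)
  have thK: "\<theta> Y = 0" if "Y \<in> K" for Y unfolding \<theta>_def using zK[OF that] by simp
  have thlin: "linear \<theta>" unfolding \<theta>_def by (rule linearI) (simp_all add: inner_add_right add_divide_distrib)
  define K0 where "K0 = span (insert X0 K)"
  have K0s: "subspace K0" unfolding K0_def by simp
  have nsp: "X0 \<notin> span K" using Ks X0(2) by (metis span_eq_iff)
  have dK0: "dim K0 = dim K + 1" unfolding K0_def dim_span using dim_insert[of X0 K] nsp by simp
  obtain w M where wM: "M + dim K0 = DIM('v)" "\<And>i j. i<M \<Longrightarrow> j<M \<Longrightarrow> w i \<bullet> w j = (if i=j then 1 else 0)"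
   "\<And>i Y. i<M \<Longrightarrow> Y\<in>K0 \<Longrightarrow> w i \<bullet> Y = 0"
    using compl_basis[OF K0s] by metis
  have wX0: "w i \<bullet> X0 = 0" if "i < M" for i using wM(3)[OF that] unfolding K0_def by (auto intro: span_base)
  have wK: "w i \<bullet> Y = 0" if "i < M" "Y \<in> K" for i Y using wM(3)[OF that(1)] that(2) unfolding K0_def by (auto intro: span_base)
  have wz: "\<theta> (w i) = 0" if "i < M" for i
  proof -
    have "w i \<bullet> z = 0" using wX0[OF that] wK[OF that yK] yz(3) by (simp add: inner_add_right)
    then show ?thesis unfolding \<theta>_def by (simp add: inner_commute)
  qed
  define P where "P = {x \<in> E. \<forall>Y\<in>K. orthogonal Y x}"
  have Ps: "subspace P" unfolding P_def
    using subspace_inter[OF Es subspace_orthogonal_to_vectors[of K]] by (simp add: Int_def)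
  have dP: "dim P + dim K = dim E" unfolding P_def by (rule dim_subspace_orthogonal_to_vectors[OF Ks Es KE])
  define d where "d = dim P"
  have dM: "d + k - 1 \<le> M" using dimE dP dK0 wM(1) k2 unfolding d_def by linarith
  define \<iota> where "\<iota> j i = (if i = 1 then j else d + i - 1)" for j i :: nat
  define \<phi> where "\<phi> j = (\<lambda>i x. if i = 0 then \<theta> x else w (\<iota> j i) \<bullet> x)" for j
  define \<beta> where "\<beta> j = wedge1 k (\<phi> j)" for j
  define V where "V j = case_nat X0 (\<lambda>i. w (\<iota> j (Suc i)))" for j
  have iM: "\<iota> j i < M" if "j \<le> d" "1 \<le> i" "i < k" for j i using that dM unfolding \<iota>_def by auto
  have ent: "\<phi> j a (V j' b) = (if a = 0 \<and> b = 0 then 1 else if a = 0 \<or> b = 0 then 0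
      else (if \<iota> j a = \<iota> j' b then 1 else 0))" if "j \<le> d" "j' \<le> d" "a < k" "b < k" for j j' a b
  proof (cases b)
    case 0 then show ?thesis using thX0 wX0 iM[of j a] that unfolding \<phi>_def V_def by auto
  next
    case (Suc b')
    then have "\<iota> j' b < M" using iM[of j' b] that by auto
    moreover have "a \<noteq> 0 \<Longrightarrow> \<iota> j a < M" using iM[of j a] that by auto
    ultimately show ?thesis using Suc wz wM(2) unfolding \<phi>_def V_def by auto
  qed
  have ev: "\<beta> j (V j') = (if j = j' then 1 else 0)" if jj: "j \<le> d" "j' \<le> d" for j j'
  proof (cases "j = j'")
    case True
    have "\<beta> j (V j) = 1" unfolding \<beta>_def
    proof (rule wedge_id)
      fix a b assume ab: "a < k" "b < k"
      have "a \<noteq> 0 \<Longrightarrow> b \<noteq> 0 \<Longrightarrow> \<iota> j a = \<iota> j b \<longleftrightarrow> a = b" using jj unfolding \<iota>_def by auto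
      then show "\<phi> j a (V j b) = (if a = b then 1 else 0)" using ent[OF jj(1) jj(1) ab] by auto
    qed
    then show ?thesis using True by simp
  next
    case False
    have "\<beta> j (V j') = 0" unfolding \<beta>_def
    proof (rule wedge_row0[of 1])
      show "1 < k" using k2 by simp
      fix b assume b: "b < k"
      have "\<iota> j 1 \<noteq> \<iota> j' b" if "b \<noteq> 0" using False jj that unfolding \<iota>_def by auto
      then show "\<phi> j 1 (V j' b) = 0" using ent[OF jj _ b, of 1] k2 by auto
    qed
    then show ?thesis using False by simp
  qed
  have bAnn: "\<beta> j \<in> Ann k K" if j: "j \<le> d" for j
    unfolding Ann_def
  proof (intro CollectI conjI ballI)
    show "\<beta> j \<in> kforms k" unfolding \<beta>_def
    proof (rule wedge_kforms)
      fix i show "linear (\<phi> j i)" unfolding \<phi>_def by (cases "i = 0") (simp_all add: thlin linear_inner_const)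
    qed
  next
    fix Y assume Y: "Y \<in> K"
    show "contr Y (\<beta> j) = (\<lambda>v. 0)"
    proof
      fix v show "contr Y (\<beta> j) v = 0" unfolding \<beta>_def contr_def
      proof (rule wedge_col0[of 0])
        show "0 < k" using k2 by simp
        fix a assume a: "a < k"
        show "\<phi> j a (case_nat Y v 0) = 0"
        proof (cases "a = 0")
          case True then show ?thesis using thK[OF Y] by (simp add: \<phi>_def)
        next
          case False then show ?thesis using wK[OF iM[OF j _ a] Y] by (simp add: \<phi>_def)
        qed
      qed
    qed
  qed
  have "\<forall>j. \<exists>Y. j \<le> d \<longrightarrow> Y \<in> E \<and> (\<forall>v. contr X0 (\<beta> j) v + contr Y \<alpha>0 v = 0)"
    using partner bAnn by blast
  then obtain Y where Y: "\<And>j. j \<le> d \<Longrightarrow> Y j \<in> E" "\<And>j v. j \<le> d \<Longrightarrow> contr X0 (\<beta> j) v + contr (Y j) \<alpha>0 v = 0"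
    by metis
  have "\<forall>j. \<exists>Z. j \<le> d \<longrightarrow> Z \<in> P \<and> Y j - Z \<in> K" 
  proof (intro allI impI)
    fix j
    obtain y' z' where yz': "y' \<in> span K" "\<And>w. w \<in> span K \<Longrightarrow> orthogonal z' w" "Y j = y' + z'"
      using orthogonal_subspace_decomp_exists[of K "Y j"] by metis
    have y'K: "y' \<in> K" using yz'(1) Ks by (metis span_eq_iff)
    show "\<exists>Z. j \<le> d \<longrightarrow> Z \<in> P \<and> Y j - Z \<in> K"
    proof (cases "j \<le> d")
      case True
      have "z' = Y j - y'" using yz'(3) by simp
      moreover have "Y j - y' \<in> E" using Y(1)[OF True] y'K KE Es by (meson subsetD subspace_diff)
      ultimately have "z' \<in> E" by simp
      moreover have "\<forall>w\<in>K. orthogonal w z'" using yz'(2) span_base by (metis orthogonal_commute)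
      ultimately show ?thesis using yz'(3) y'K unfolding P_def by (intro exI[of _ z']) auto
    qed auto
  qed
  then obtain Zp where Zp: "\<And>j. j \<le> d \<Longrightarrow> Zp j \<in> P" "\<And>j. j \<le> d \<Longrightarrow> Y j - Zp j \<in> K" by metis
  obtain c where c: "\<exists>j\<in>{..d}. c j \<noteq> 0" "(\<Sum>j\<in>{..d}. c j *\<^sub>R Zp j) = 0"
    using dep_family[of "{..d}" Zp P] Zp(1) Ps unfolding d_def by force
  have "(\<Sum>j\<in>{..d}. c j *\<^sub>R (Y j - Zp j)) \<in> K"
    using Zp(2) Ks by (intro subspace_sum subspace_scale) auto
  moreover have "(\<Sum>j\<in>{..d}. c j *\<^sub>R (Y j - Zp j)) = (\<Sum>j\<in>{..d}. c j *\<^sub>R Y j) - (\<Sum>j\<in>{..d}. c j *\<^sub>R Zp j)"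
    by (simp add: scaleR_diff_right sum_subtractf)
  ultimately have SK: "(\<Sum>j\<in>{..d}. c j *\<^sub>R Y j) \<in> K" using c(2) by simp
  have "c j' = 0" if j': "j' \<le> d" for j'
  proof -
    define u where "u = (\<lambda>i. V j' (Suc i))"
    have cu: "case_nat X0 u = V j'" unfolding u_def V_def by (auto simp: fun_eq_iff split: nat.split)
    have "0 = contr (\<Sum>j\<in>{..d}. c j *\<^sub>R Y j) \<alpha>0 u" using a0K[OF SK] by simp
    also have "\<dots> = (\<Sum>j\<in>{..d}. c j * contr (Y j) \<alpha>0 u)" by (rule contr_sum[OF a0k]) simp
    also have "\<dots> = (\<Sum>j\<in>{..d}. if j = j' then - c j' else 0)"
    proof (rule sum.cong)
      fix j assume j: "j \<in> {..d}"
      have "contr (Y j) \<alpha>0 u = - \<beta> j (V j')" using Y(2)[of j u] j cu by (simp add: contr_def)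
      then show "c j * contr (Y j) \<alpha>0 u = (if j = j' then - c j' else 0)" using ev[of j j'] j j' by auto
    qed simp
    also have "\<dots> = - c j'" using j' by (simp add: sum.delta')
    finally show ?thesis by simp
  qed
  then show False using c(1) by auto
qed



theorem propositionA4:
  fixes k :: nat and L :: "('v::euclidean_space \<times> ((nat \<Rightarrow> 'v) \<Rightarrow> real)) set"
  assumes "2 \<le> k" and "k \<le> DIM('v) - 1"
    and "is_subspace k L" and "standard k L"
  shows "C2s k L \<longleftrightarrow>
    ((\<exists>\<omega>\<in>kforms (Suc k). decomposable (Suc k) \<omega> \<and> L = {(X, contr X \<omega>) | X. True}) \<or>
     (\<exists>E. subspace E \<and> dim E \<le> DIM('v) - k \<and> L = {(X, \<alpha>) | X \<alpha>. X \<in> E \<and> \<alpha> \<in> Ann k E}))"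
proof -
  have k2: "2 \<le> k" by fact
  obtain k' where k': "k = Suc k'" using k2 by (cases k) auto
  have Lk: "\<And>X \<alpha>. (X, \<alpha>) \<in> L \<Longrightarrow> \<alpha> \<in> kforms k" using assms(3) unfolding is_subspace_def by blast
  have Lk': "\<And>X \<alpha>. (X, \<alpha>) \<in> L \<Longrightarrow> \<alpha> \<in> kforms (Suc k')" using Lk k' by simp
  have L0: "(0, \<lambda>v. 0) \<in> L" using assms(3) unfolding is_subspace_def by blast
  have Ladd: "\<And>X \<alpha> Y \<beta>. (X, \<alpha>) \<in> L \<Longrightarrow> (Y, \<beta>) \<in> L \<Longrightarrow> (X + Y, \<lambda>v. \<alpha> v + \<beta> v) \<in> L"
    using assms(3) unfolding is_subspace_def by blast
  have Lscale: "\<And>c X \<alpha>. (X, \<alpha>) \<in> L \<Longrightarrow> (c *\<^sub>R X, \<lambda>v. c * \<alpha> v) \<in> L"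
    using assms(3) unfolding is_subspace_def by blast
  have Lneg: "(X - Y, \<lambda>v. \<alpha> v - \<beta> v) \<in> L" if "(X, \<alpha>) \<in> L" "(Y, \<beta>) \<in> L" for X Y \<alpha> \<beta>
    using Ladd[OF that(1) Lscale[OF that(2), of "-1"]] by simp
  have iso: "isotropic k L" using assms(4) unfolding standard_def by blast
  have std: "annV (Ann k (fst ` L)) = fst ` L" using assms(4) unfolding standard_def by blast
  have pair: "contr X \<beta> v + contr Y \<alpha> v = 0" if "(X, \<alpha>) \<in> L" "(Y, \<beta>) \<in> L" for X Y \<alpha> \<beta> v
  proof -
    have "(Y, \<beta>) \<in> orth k L" using iso that(2) unfolding isotropic_def by blast
    then have "pairing (X, \<alpha>) (Y, \<beta>) = (\<lambda>v. 0)" using that(1) unfolding orth_def by blast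
    then show ?thesis unfolding pairing_def by (simp add: fun_eq_iff)
  qed
  show ?thesis
  proof
    assume C: "C2s k L"
    then have CA: "Ann k (capV L) = snd ` L" by (simp add: C2s_def)
    show "(\<exists>\<omega>\<in>kforms (Suc k). decomposable (Suc k) \<omega> \<and> L = {(X, contr X \<omega>) | X. True}) \<or>
     (\<exists>E. subspace E \<and> dim E \<le> DIM('v) - k \<and> L = {(X, \<alpha>) | X \<alpha>. X \<in> E \<and> \<alpha> \<in> Ann k E})"
    proof (cases "fst ` L = UNIV")
      case True
      have ex: "\<exists>\<alpha>. (X, \<alpha>) \<in> L" for X
      proof -
        have "X \<in> fst ` L" using True by simp
        then show ?thesis by force
      qed
      have N0: "\<gamma> = (\<lambda>v. 0)" if g: "(0, \<gamma>) \<in> L" for \<gamma>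
      proof (rule Ann_UNIV)
        show "0 < k" using k2 by simp
        show "\<gamma> \<in> Ann k UNIV" unfolding Ann_def
        proof (intro CollectI conjI ballI)
          show "\<gamma> \<in> kforms k" by (rule Lk[OF g])
          fix Y :: 'v
          obtain \<alpha> where a: "(Y, \<alpha>) \<in> L" using ex by blast
          show "contr Y \<gamma> = (\<lambda>v. 0)"
          proof
            fix v show "contr Y \<gamma> v = 0" using pair[OF a g, of v] contr_0[OF Lk'[OF a]] by simp
          qed
        qed
      qed
      have uniq: "\<alpha> = \<beta>" if "(X, \<alpha>) \<in> L" "(X, \<beta>) \<in> L" for X \<alpha> \<beta>
      proof -
        have "(0, \<lambda>v. \<alpha> v - \<beta> v) \<in> L" using Lneg[OF that] by simp
        then have "(\<lambda>v. \<alpha> v - \<beta> v) = (\<lambda>v. 0)" by (rule N0)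
        then show ?thesis by (simp add: fun_eq_iff)
      qed
      define \<phi> where "\<phi> X = (SOME \<alpha>. (X, \<alpha>) \<in> L)" for X
      have \<phi>L: "(X, \<phi> X) \<in> L" for X unfolding \<phi>_def using ex[of X] by (rule someI_ex)
      have \<phi>eq: "\<alpha> = \<phi> X" if "(X, \<alpha>) \<in> L" for X \<alpha> using uniq[OF that \<phi>L] .
      have \<phi>k: "\<phi> X \<in> kforms k" for X using Lk[OF \<phi>L] .
      have \<phi>add: "\<phi> (X + Y) = (\<lambda>v. \<phi> X v + \<phi> Y v)" for X Y using \<phi>eq[OF Ladd[OF \<phi>L \<phi>L]] by simp
      have \<phi>scale: "\<phi> (c *\<^sub>R X) = (\<lambda>v. c * \<phi> X v)" for c X using \<phi>eq[OF Lscale[OF \<phi>L]] by simp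
      have self: "contr X (\<phi> X) = (\<lambda>v. 0)" for X
      proof
        fix v show "contr X (\<phi> X) v = 0" using pair[OF \<phi>L \<phi>L, of X X v] by simp
      qed
      define \<omega> where "\<omega> v = \<phi> (v 0) (\<lambda>i. v (Suc i))" for v
      have c\<omega>: "contr X \<omega> = \<phi> X" for X
        by (rule ext) (simp add: contr_def \<omega>_def)
      have \<omega>k: "\<omega> \<in> kforms (Suc k)"
        unfolding kforms_def
      proof (intro CollectI conjI allI impI)
        fix v w :: "nat \<Rightarrow> 'v" assume h: "\<forall>i<Suc k. v i = w i"
        then have "v 0 = w 0" by simp
        moreover have "\<phi> (v 0) (\<lambda>i. v (Suc i)) = \<phi> (v 0) (\<lambda>i. w (Suc i))"
          by (rule kf_dep[OF \<phi>k]) (use h in simp)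
        ultimately show "\<omega> v = \<omega> w" unfolding \<omega>_def by simp
      next
        fix i and v :: "nat \<Rightarrow> 'v" assume i: "i < Suc k"
        show "linear (\<lambda>x. \<omega> (v(i := x)))"
        proof (cases i)
          case 0
          have "(\<lambda>x. \<omega> (v(i := x))) = (\<lambda>x. \<phi> x (\<lambda>l. v (Suc l)))" unfolding \<omega>_def 0 by simp
          moreover have "linear (\<lambda>x. \<phi> x (\<lambda>l. v (Suc l)))"
            by (rule linearI) (simp_all add: \<phi>add \<phi>scale)
          ultimately show ?thesis by simp
        next
          case (Suc i')
          have fl: "(\<lambda>l. (v(i := x)) (Suc l)) = (\<lambda>l. v (Suc l))(i' := x)" for x
            unfolding Suc by (auto simp: fun_eq_iff)
          have v0: "(v(i := x)) 0 = v 0" for x using Suc by simp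
          have "\<omega> (v(i := x)) = \<phi> (v 0) ((\<lambda>l. v (Suc l))(i' := x))" for x
            unfolding \<omega>_def fl v0 by (rule refl)
          then have "(\<lambda>x. \<omega> (v(i := x))) = (\<lambda>x. \<phi> (v 0) ((\<lambda>l. v (Suc l))(i' := x)))" by (rule ext)
          moreover have "linear (\<lambda>x. \<phi> (v 0) ((\<lambda>l. v (Suc l))(i' := x)))"
            by (rule kf_lin[OF \<phi>k]) (use i Suc in simp)
          ultimately show ?thesis by simp
        qed
      next
        fix v :: "nat \<Rightarrow> 'v" and i j assume h: "i < Suc k \<and> j < Suc k \<and> i \<noteq> j \<and> v i = v j"
        have kill: "\<omega> v = 0" if "j' < k" "v (Suc j') = v 0" for j'
          unfolding \<omega>_def by (rule kf_kill[OF \<phi>k self that(1)]) (use that in simp)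
        show "\<omega> v = 0"
        proof (cases i)
          case 0
          then obtain j' where "j = Suc j'" using h by (cases j) auto
          then show ?thesis using kill[of j'] h 0 by simp
        next
          case (Suc i')
          show ?thesis
          proof (cases j)
            case 0 then show ?thesis using kill[of i'] h Suc by simp
          next
            case (Suc j')
            show ?thesis unfolding \<omega>_def
              by (rule kf_alt[OF \<phi>k, of i' j']) (use h Suc \<open>i = Suc i'\<close> in simp_all)
          qed
        qed
      qed
      have Lg: "L = {(X, contr X \<omega>) | X. True}"
      proof (rule set_eqI)
        fix p :: "'v \<times> ((nat \<Rightarrow> 'v) \<Rightarrow> real)"
        obtain X \<alpha> where p: "p = (X, \<alpha>)" by (cases p)
        show "p \<in> L \<longleftrightarrow> p \<in> {(X, contr X \<omega>) | X. True}"
          unfolding p c\<omega>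
        proof
          assume "(X, \<alpha>) \<in> L"
          then have "\<alpha> = \<phi> X" by (rule \<phi>eq)
          then show "(X, \<alpha>) \<in> {(X, \<phi> X) | X. True}" by blast
        next
          assume "(X, \<alpha>) \<in> {(X, \<phi> X) | X. True}"
          then have "\<alpha> = \<phi> X" by blast
          then show "(X, \<alpha>) \<in> L" using \<phi>L[of X] by simp
        qed
      qed
      have capK: "capV L = {X. contr X \<omega> = (\<lambda>v. 0)}"
        unfolding capV_def c\<omega>
      proof (intro set_eqI iffI; simp only: mem_Collect_eq)
        fix X assume "(X, \<lambda>v. 0) \<in> L"
        then have "(\<lambda>v. 0) = \<phi> X" by (rule \<phi>eq)
        then show "\<phi> X = (\<lambda>v. 0)" by simp
      next
        fix X assume "\<phi> X = (\<lambda>v. 0)"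
        then show "(X, \<lambda>v. 0) \<in> L" using \<phi>L[of X] by simp
      qed
      have sndL: "snd ` L = range (\<lambda>X. contr X \<omega>)" unfolding Lg by force
      have "Ann k {X. contr X \<omega> = (\<lambda>v. 0)} \<subseteq> range (\<lambda>X. contr X \<omega>)" using CA capK sndL by simp
      then have "decomposable (Suc k) \<omega>" using dec_main[OF \<omega>k k2] by simp
      then show ?thesis using \<omega>k Lg by blast
    next
      case False
      define E where "E = fst ` L"
      define K where "K = capV L"
      have Es: "subspace E" unfolding subspace_def E_def
      proof (intro conjI ballI allI)
        show "0 \<in> fst ` L" using L0 by force
      next
        fix x y assume "x \<in> fst ` L" "y \<in> fst ` L"
        then obtain a b where "(x, a) \<in> L" "(y, b) \<in> L" by force
        from Ladd[OF this] show "x + y \<in> fst ` L" by force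
      next
        fix c x assume "x \<in> fst ` L"
        then obtain a where "(x, a) \<in> L" by force
        from Lscale[OF this, of c] show "c *\<^sub>R x \<in> fst ` L" by force
      qed
      have Ks: "subspace K" unfolding subspace_def K_def capV_def
      proof (intro conjI ballI allI)
        show "0 \<in> {X. (X, \<lambda>v. 0) \<in> L}" using L0 by simp
      next
        fix x y assume "x \<in> {X. (X, \<lambda>v. 0) \<in> L}" "y \<in> {X. (X, \<lambda>v. 0) \<in> L}"
        then show "x + y \<in> {X. (X, \<lambda>v. 0) \<in> L}" using Ladd by fastforce
      next
        fix c x assume "x \<in> {X. (X, \<lambda>v. 0) \<in> L}"
        then show "c *\<^sub>R x \<in> {X. (X, \<lambda>v. 0) \<in> L}" using Lscale[of x "\<lambda>v. 0" c] by simp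
      qed
      have KE: "K \<subseteq> E" unfolding K_def E_def capV_def by force
      have dimE: "dim E + k \<le> DIM('v)"
      proof (rule ccontr)
        assume nd: "\<not> ?thesis"
        obtain e m where em: "m + dim E = DIM('v)" "\<And>x. \<exists>b\<in>span (e ` {..<m}). x - b \<in> E"
          using compl_basis[OF Es] by metis
        have z: "\<eta> = (\<lambda>v. 0)" if "\<eta> \<in> Ann k E" for \<eta>
        proof
          fix w show "\<eta> w = 0"
            by (rule kf_small_zero[of \<eta> k E e m]) (use that em nd in \<open>auto simp: Ann_def\<close>)
        qed
        have "annV (Ann k E) = UNIV"
        proof (rule set_eqI)
          fix x
          have "\<forall>\<eta>\<in>Ann k E. contr x \<eta> = (\<lambda>v. 0)"
          proof
            fix \<eta> assume "\<eta> \<in> Ann k E"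
            then have "\<eta> = (\<lambda>v. 0)" by (rule z)
            then show "contr x \<eta> = (\<lambda>v. 0)" by (simp add: contr_zero_form)
          qed
          then show "x \<in> annV (Ann k E) \<longleftrightarrow> x \<in> UNIV" unfolding annV_def by simp
        qed
        then have "E = UNIV" using std unfolding E_def by simp
        then show False using False unfolding E_def by simp
      qed
      have KeqE: "K = E"
      proof (rule ccontr)
        assume "K \<noteq> E"
        then obtain X0 where X0: "X0 \<in> E" "X0 \<notin> K" using KE by blast
        then obtain \<alpha>0 where a0L: "(X0, \<alpha>0) \<in> L" unfolding E_def by force
        have a0: "\<alpha>0 \<in> Ann k K" using CA a0L unfolding K_def by force
        show False
        proof (rule K_eq_E_aux[OF k2 dimE Ks Es KE X0 a0])
          fix \<beta> assume "\<beta> \<in> Ann k K"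
          then obtain Y where Y: "(Y, \<beta>) \<in> L" using CA unfolding K_def by force
          then show "\<exists>Y\<in>E. \<forall>v. contr X0 \<beta> v + contr Y \<alpha>0 v = 0"
            using pair[OF a0L Y] unfolding E_def by force
        qed
      qed
      have "L = {(X, \<alpha>) | X \<alpha>. X \<in> E \<and> \<alpha> \<in> Ann k E}"
      proof (rule set_eqI)
        fix p :: "'v \<times> ((nat \<Rightarrow> 'v) \<Rightarrow> real)"
        obtain X \<alpha> where p: "p = (X, \<alpha>)" by (cases p)
        show "p \<in> L \<longleftrightarrow> p \<in> {(X, \<alpha>) | X \<alpha>. X \<in> E \<and> \<alpha> \<in> Ann k E}"
        proof
          assume "p \<in> L"
          then show "p \<in> {(X, \<alpha>) | X \<alpha>. X \<in> E \<and> \<alpha> \<in> Ann k E}"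
            using CA KeqE unfolding p E_def K_def by force
        next
          assume "p \<in> {(X, \<alpha>) | X \<alpha>. X \<in> E \<and> \<alpha> \<in> Ann k E}"
          then have XE: "X \<in> E" and aE: "\<alpha> \<in> Ann k E" unfolding p by auto
          have X0: "(X, \<lambda>v. 0) \<in> L" using XE KeqE unfolding K_def capV_def by auto
          obtain Y where Y: "(Y, \<alpha>) \<in> L" using aE CA KeqE unfolding K_def by force
          then have "Y \<in> K" using KeqE unfolding E_def by force
          then have Y0: "(Y, \<lambda>v. 0) \<in> L" unfolding K_def capV_def by simp
          have "(0, \<alpha>) \<in> L" using Lneg[OF Y Y0] by simp
          from Ladd[OF X0 this] show "p \<in> L" unfolding p by simp
        qed
      qed
      then have "subspace E \<and> dim E \<le> DIM('v) - k \<and> L = {(X, \<alpha>) | X \<alpha>. X \<in> E \<and> \<alpha> \<in> Ann k E}"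
        using Es dimE by simp
      then show ?thesis by blast
    qed
  next
    assume "(\<exists>\<omega>\<in>kforms (Suc k). decomposable (Suc k) \<omega> \<and> L = {(X, contr X \<omega>) | X. True}) \<or>
     (\<exists>E. subspace E \<and> dim E \<le> DIM('v) - k \<and> L = {(X, \<alpha>) | X \<alpha>. X \<in> E \<and> \<alpha> \<in> Ann k E})"
    then show "C2s k L"
    proof
      assume "\<exists>\<omega>\<in>kforms (Suc k). decomposable (Suc k) \<omega> \<and> L = {(X, contr X \<omega>) | X. True}"
      then obtain \<omega> where w: "\<omega> \<in> kforms (Suc k)" "decomposable (Suc k) \<omega>" "L = {(X, contr X \<omega>) | X. True}"
        by blast
      have capK: "capV L = {X. contr X \<omega> = (\<lambda>v. 0)}" unfolding capV_def w(3) by auto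
      have sndL: "snd ` L = range (\<lambda>X. contr X \<omega>)" unfolding w(3) by force
      have w2: "\<omega> \<in> kforms (Suc (Suc k'))" using w(1) k' by simp
      have "range (\<lambda>X. contr X \<omega>) \<subseteq> Ann k {X. contr X \<omega> = (\<lambda>v. 0)}"
        using range_sub_Ann[OF w2] k' by auto
      moreover have "Ann k {X. contr X \<omega> = (\<lambda>v. 0)} \<subseteq> range (\<lambda>X. contr X \<omega>)"
        using dec_main[OF w(1) k2] w(2) by simp
      ultimately show ?thesis unfolding C2s_def using iso capK sndL by auto
    next
      assume "\<exists>E. subspace E \<and> dim E \<le> DIM('v) - k \<and> L = {(X, \<alpha>) | X \<alpha>. X \<in> E \<and> \<alpha> \<in> Ann k E}"
      then obtain E where E: "subspace E" "L = {(X, \<alpha>) | X \<alpha>. X \<in> E \<and> \<alpha> \<in> Ann k E}" by blast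
      have z: "(\<lambda>v. 0) \<in> Ann k E" unfolding Ann_def using kforms_zero contr_zero_form by auto
      have capE: "capV L = E" unfolding capV_def E(2) using z by auto
      have "snd ` L = Ann k E" unfolding E(2) using subspace_0[OF E(1)] by force
      then show ?thesis unfolding C2s_def using iso capE by simp
    qed
  qed
qed


end
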